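(* Let $L>0$, $a\in\mathbb{R}$, $(\alpha,\beta)\in\mathbb{R}^2$, and let $u_1,u_2$ be $L^2$-normalized first and second eigenfunctions of $-\frac{d^2}{dx^2}+ax$ on $(-L/2,L/2)$ with Robin boundary conditions $u'(-L/2)=\alpha u(-L/2)$, $u'(L/2)=-\beta u(L/2)$. If $\int_{-L/2}^{L/2}x\,(u_2^2-u_1^2)\,dx=0$, then $u_2(-L/2)^2>u_1(-L/2)^2$ and $u_2(L/2)^2>u_1(L/2)^2$. *)

theory Defs
  imports "HOL-Analysis.Analysis"
begin

definition robin_eigenpair ::
  "real \<Rightarrow> real \<Rightarrow> real \<Rightarrow> real \<Rightarrow> real \<Rightarrow> (real \<Rightarrow> real) \<Rightarrow> bool" where
  "robin_eigenpair L a \<alpha> \<beta> lam u \<longleftrightarrow>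
     (\<exists>x\<in>{-L/2..L/2}. u x \<noteq> 0) \<and>
     (\<exists>u' u''.
        (\<forall>x\<in>{-L/2..L/2}.
            (u has_real_derivative u' x) (at x within {-L/2..L/2}) \<and>
            (u' has_real_derivative u'' x) (at x within {-L/2..L/2}) \<and>
            - u'' x + a * x * u x = lam * u x) \<and>
        u' (-L/2) = \<alpha> * u (-L/2) \<and>
        u' (L/2) = - \<beta> * u (L/2))"

definition robin_eigenvalue :: "real \<Rightarrow> real \<Rightarrow> real \<Rightarrow> real \<Rightarrow> real \<Rightarrow> bool" where
  "robin_eigenvalue L a \<alpha> \<beta> lam \<longleftrightarrow> (\<exists>u. robin_eigenpair L a \<alpha> \<beta> lam u)"

definition first_eigenfunction :: "real \<Rightarrow> real \<Rightarrow> real \<Rightarrow> real \<Rightarrow> (real \<Rightarrow> real) \<Rightarrow> bool" where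
  "first_eigenfunction L a \<alpha> \<beta> u \<longleftrightarrow>
     (\<exists>lam. robin_eigenpair L a \<alpha> \<beta> lam u \<and>
            (\<forall>\<mu>. robin_eigenvalue L a \<alpha> \<beta> \<mu> \<longrightarrow> lam \<le> \<mu>))"

definition second_eigenfunction :: "real \<Rightarrow> real \<Rightarrow> real \<Rightarrow> real \<Rightarrow> (real \<Rightarrow> real) \<Rightarrow> bool" where
  "second_eigenfunction L a \<alpha> \<beta> u \<longleftrightarrow>
     (\<exists>lam. robin_eigenpair L a \<alpha> \<beta> lam u \<and>
            (\<exists>\<mu>. robin_eigenvalue L a \<alpha> \<beta> \<mu> \<and> \<mu> < lam) \<and>
            (\<forall>\<mu> \<nu>. robin_eigenvalue L a \<alpha> \<beta> \<mu> \<and> \<mu> < lam \<and>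
                    robin_eigenvalue L a \<alpha> \<beta> \<nu> \<and> \<nu> < lam \<longrightarrow> \<mu> = \<nu>))"

definition L2_normalized :: "real \<Rightarrow> (real \<Rightarrow> real) \<Rightarrow> bool" where
  "L2_normalized L u \<longleftrightarrow> integral {-L/2..L/2} (\<lambda>x. (u x)\<^sup>2) = 1"

end

theory Submission
  imports Defs
begin


fun cf :: "real \<Rightarrow> real \<Rightarrow> real \<Rightarrow> nat \<Rightarrow> real" where
  "cf a al c 0 = 1"
| "cf a al c (Suc 0) = al"
| "cf a al c (Suc (Suc 0)) = c / 2"
| "cf a al c (Suc (Suc (Suc n))) = (c * cf a al c (Suc n) + a * cf a al c n) / (real (n+2) * real (n+3))"

lemma cf_bound:
  assumes R: "R > 0"
  shows "\<exists>B. \<forall>n. \<bar>cf a al c n\<bar> * R^n \<le> B"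
proof -
  obtain N :: nat where N: "real N \<ge> \<bar>c\<bar> * R^2 + \<bar>a\<bar> * R^3" by (meson real_arch_simple)
  define B where "B = Max ((\<lambda>k. \<bar>cf a al c k\<bar> * R^k) ` {..N+2})"
  have Bk: "\<bar>cf a al c k\<bar> * R^k \<le> B" if "k \<le> N+2" for k
    unfolding B_def by (rule Max_ge) (use that in auto)
  have B0: "B \<ge> 0" using Bk[of 0] by simp
  have "\<bar>cf a al c n\<bar> * R^n \<le> B" for n
  proof (induction n rule: less_induct)
    case (less n)
    show ?case
    proof (cases "n \<le> N+2")
      case True then show ?thesis by (rule Bk)
    next
      case False
      define m where "m = n - 3"
      have n: "n = Suc (Suc (Suc m))" and mN: "m \<ge> N" using False by (simp_all add: m_def)
      have i1: "\<bar>cf a al c (Suc m)\<bar> * R^(Suc m) \<le> B" using less.IH[of "Suc m"] n by linarith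
      have i2: "\<bar>cf a al c m\<bar> * R^m \<le> B" using less.IH[of m] n by linarith
      have den: "real (m+2) * real (m+3) \<ge> \<bar>c\<bar> * R^2 + \<bar>a\<bar> * R^3"
      proof -
        have "real (m+2) * real (m+3) \<ge> real m" by (simp add: algebra_simps)
        moreover have "real m \<ge> real N" using mN by simp
        ultimately show ?thesis using N by linarith
      qed
      have dpos: "real (m+2) * real (m+3) > 0" by simp
      have "\<bar>cf a al c n\<bar> * R^n = \<bar>c * cf a al c (Suc m) + a * cf a al c m\<bar> * R^(Suc (Suc (Suc m))) / (real (m+2) * real (m+3))"
        using n R by (simp add: abs_divide abs_mult)
      also have "\<dots> \<le> (\<bar>c\<bar> * R^2 * (\<bar>cf a al c (Suc m)\<bar> * R^(Suc m)) + \<bar>a\<bar> * R^3 * (\<bar>cf a al c m\<bar> * R^m)) / (real (m+2) * real (m+3))"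
      proof (rule divide_right_mono)
        have "\<bar>c * cf a al c (Suc m) + a * cf a al c m\<bar> * R^(Suc (Suc (Suc m))) \<le> (\<bar>c\<bar> * \<bar>cf a al c (Suc m)\<bar> + \<bar>a\<bar> * \<bar>cf a al c m\<bar>) * R^(Suc (Suc (Suc m)))"
          by (rule mult_right_mono) (auto simp: abs_mult intro: order.trans[OF abs_triangle_ineq] simp: R less_imp_le)
        also have "\<dots> = \<bar>c\<bar> * R^2 * (\<bar>cf a al c (Suc m)\<bar> * R^(Suc m)) + \<bar>a\<bar> * R^3 * (\<bar>cf a al c m\<bar> * R^m)"
        proof -
          have p1: "R^(Suc (Suc (Suc m))) = R^2 * R^(Suc m)" and p2: "R^(Suc (Suc (Suc m))) = R^3 * R^m"
            by (simp_all add: numeral_2_eq_2 numeral_3_eq_3)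
          show ?thesis by (simp add: algebra_simps numeral_2_eq_2 numeral_3_eq_3)
        qed
        finally show "\<bar>c * cf a al c (Suc m) + a * cf a al c m\<bar> * R^(Suc (Suc (Suc m))) \<le> \<bar>c\<bar> * R^2 * (\<bar>cf a al c (Suc m)\<bar> * R^(Suc m)) + \<bar>a\<bar> * R^3 * (\<bar>cf a al c m\<bar> * R^m)" .
      qed simp
      also have "\<dots> \<le> (\<bar>c\<bar> * R^2 * B + \<bar>a\<bar> * R^3 * B) / (real (m+2) * real (m+3))"
        by (intro divide_right_mono add_mono mult_left_mono i1 i2) (auto simp: R less_imp_le)
      also have "\<dots> = (\<bar>c\<bar> * R^2 + \<bar>a\<bar> * R^3) * B / (real (m+2) * real (m+3))" by (simp add: algebra_simps)
      also have "\<dots> \<le> B"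
      proof -
        have "(\<bar>c\<bar> * R^2 + \<bar>a\<bar> * R^3) * B \<le> (real (m+2) * real (m+3)) * B"
          by (rule mult_right_mono[OF den B0])
        then show ?thesis using dpos by (simp add: divide_le_eq mult.commute)
      qed
      finally show ?thesis .
    qed
  qed
  then show ?thesis by blast
qed

lemma cf_summable: "summable (\<lambda>n. cf a al c n * t^n)"
proof -
  obtain B where B: "\<And>n. \<bar>cf a al c n\<bar> * (\<bar>t\<bar>+1)^n \<le> B" using cf_bound[of "\<bar>t\<bar>+1"] by force
  have "summable (\<lambda>n. norm (cf a al c n) * \<bar>t\<bar>^n)"
    using Abel_lemma[of "\<bar>t\<bar>" "\<bar>t\<bar>+1" "cf a al c" B] B by auto
  then have "summable (\<lambda>n. norm (cf a al c n * t^n))" by (simp add: abs_mult power_abs)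
  then show ?thesis by (rule summable_norm_cancel)
qed

definition PS where "PS a al c t = (\<Sum>n. cf a al c n * t^n)"
definition PS1 where "PS1 a al c t = (\<Sum>n. diffs (cf a al c) n * t^n)"
definition PS2 where "PS2 a al c t = (\<Sum>n. diffs (diffs (cf a al c)) n * t^n)"

lemma PS_deriv: "(PS a al c has_field_derivative PS1 a al c t) (at t)"
proof -
  have e: "PS a al c = (\<lambda>t. \<Sum>n. cf a al c n * t^n)" by (rule ext) (simp add: PS_def)
  show ?thesis unfolding e PS1_def
    using termdiffs_strong_converges_everywhere[of "cf a al c" t] cf_summable by blast
qed

lemma diffs_summable: "summable (\<lambda>n. diffs (cf a al c) n * t^n)"
  by (rule termdiff_converges_all) (rule cf_summable)

lemma PS1_deriv: "(PS1 a al c has_field_derivative PS2 a al c t) (at t)"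
proof -
  have e: "PS1 a al c = (\<lambda>t. \<Sum>n. diffs (cf a al c) n * t^n)" by (rule ext) (simp add: PS1_def)
  show ?thesis unfolding e PS2_def
    using termdiffs_strong_converges_everywhere[of "diffs (cf a al c)" t] diffs_summable by blast
qed

lemma PS_0: "PS a al c 0 = 1" unfolding PS_def using powser_zero[of "cf a al c"] by simp
lemma PS1_0: "PS1 a al c 0 = al" unfolding PS1_def using powser_zero[of "diffs (cf a al c)"] by (simp add: diffs_def)

lemma PS2_eq: "PS2 a al c t = (c + a * t) * PS a al c t"
proof -
  let ?f = "cf a al c"
  have s0: "(\<lambda>n. ?f n * t^n) sums PS a al c t" unfolding PS_def using cf_summable by (rule summable_sums)
  have s1: "(\<lambda>n. c * (?f n * t^n)) sums (c * PS a al c t)" by (rule sums_mult[OF s0])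
  have s2': "(\<lambda>n. a * t * (?f n * t^n)) sums (a * t * PS a al c t)" by (rule sums_mult[OF s0])
  define e where "e n = (if n = 0 then 0 else a * ?f (n - 1) * t^n)" for n
  have "(\<lambda>n. e (Suc n)) = (\<lambda>n. a * t * (?f n * t^n))"
    by (rule ext) (simp add: e_def mult_ac)
  then have "(\<lambda>n. e (Suc n)) sums (a * t * PS a al c t)"
    using s2' by simp
  then have s2: "e sums (a * t * PS a al c t)" by (subst (asm) sums_Suc_iff) (simp add: e_def)
  have s3: "(\<lambda>n. c * (?f n * t^n) + e n) sums (c * PS a al c t + a * t * PS a al c t)"
    by (rule sums_add[OF s1 s2])
  have eq: "c * (?f n * t^n) + e n = diffs (diffs ?f) n * t^n" for n
  proof (cases n)
    case 0
    have "diffs (diffs ?f) 0 = 2 * ?f (Suc (Suc 0))" by (simp add: diffs_def)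
    then show ?thesis using 0 by (simp add: e_def)
  next
    case (Suc m)
    have dd: "diffs (diffs ?f) n = real (Suc n) * real (Suc (Suc n)) * ?f (Suc (Suc n))"
      by (simp add: diffs_def)
    have f3: "?f (Suc (Suc n)) = (c * ?f (Suc m) + a * ?f m) / (real (m+2) * real (m+3))"
      using Suc by simp
    have r3: "real (Suc n) * real (Suc (Suc n)) = real (m+2) * real (m+3)" using Suc by simp
    have nz: "real (m+2) * real (m+3) \<noteq> 0" by simp
    have "real (Suc n) * real (Suc (Suc n)) * ?f (Suc (Suc n)) = c * ?f (Suc m) + a * ?f m"
      unfolding f3 r3 using nz by simp
    then show ?thesis using Suc dd unfolding e_def by (simp add: distrib_right)
  qed
  have "(\<lambda>n. diffs (diffs ?f) n * t^n) sums (c * PS a al c t + a * t * PS a al c t)"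
    using s3 eq by simp
  then have "PS2 a al c t = c * PS a al c t + a * t * PS a al c t" unfolding PS2_def by (rule sums_unique[symmetric])
  then show ?thesis by (simp add: algebra_simps)
qed



lemma abs_2xy: "\<bar>2 * x * y\<bar> \<le> x\<^sup>2 + y\<^sup>2" for x y :: real
proof -
  have "2 * \<bar>x\<bar> * \<bar>y\<bar> \<le> \<bar>x\<bar>\<^sup>2 + \<bar>y\<bar>\<^sup>2" by (rule sum_squares_bound)
  then show ?thesis by (simp add: abs_mult)
qed

locale rob =
  fixes L a al be :: real
  assumes Lpos: "L > 0"
begin

definition "lo = - L / 2"
definition "hi = L / 2"
definition "I = {lo .. hi}"

lemma lo_hi: "lo < hi" using Lpos by (simp add: lo_def hi_def)
lemma lo_I: "lo \<in> I" and hi_I: "hi \<in> I" using lo_hi by (auto simp: I_def)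
lemma hi_lo: "hi - lo = L" by (simp add: lo_def hi_def)
lemma I_iff: "x \<in> I \<longleftrightarrow> lo \<le> x \<and> x \<le> hi" by (simp add: I_def)
lemma I_abs: "x \<in> I \<Longrightarrow> \<bar>x\<bar> \<le> L" using Lpos by (auto simp: I_def lo_def hi_def)

definition "sol lam y y' \<longleftrightarrow> (\<forall>x\<in>I. (y has_real_derivative y' x) (at x within I) \<and>
    (y' has_real_derivative (a * x - lam) * y x) (at x within I))"

definition "Y lam x = PS a al (a * lo - lam) (x - lo)"
definition "Y1 lam x = PS1 a al (a * lo - lam) (x - lo)"
definition "g lam = Y1 lam hi + be * Y lam hi"

lemma Y_lo: "Y lam lo = 1" by (simp add: Y_def PS_0)
lemma Y1_lo: "Y1 lam lo = al" by (simp add: Y1_def PS1_0)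

lemma Y_deriv: "(Y lam has_real_derivative Y1 lam x) (at x within S)"
proof -
  have "((\<lambda>x. PS a al (a * lo - lam) (x - lo)) has_real_derivative PS1 a al (a * lo - lam) (x - lo) * 1) (at x within S)"
    by (rule DERIV_chain'[where g="PS a al (a * lo - lam)"]) (auto intro!: derivative_eq_intros PS_deriv)
  then show ?thesis by (simp add: Y_def[abs_def] Y1_def)
qed

lemma Y1_deriv: "(Y1 lam has_real_derivative (a * x - lam) * Y lam x) (at x within S)"
proof -
  have "((\<lambda>x. PS1 a al (a * lo - lam) (x - lo)) has_real_derivative PS2 a al (a * lo - lam) (x - lo) * 1) (at x within S)"
    by (rule DERIV_chain'[where g="PS1 a al (a * lo - lam)"]) (auto intro!: derivative_eq_intros PS1_deriv)
  moreover have "PS2 a al (a * lo - lam) (x - lo) = (a * x - lam) * Y lam x"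
    by (simp add: PS2_eq Y_def algebra_simps)
  ultimately show ?thesis by (simp add: Y_def[abs_def] Y1_def[abs_def])
qed

lemma Y_sol: "sol lam (Y lam) (Y1 lam)"
  unfolding sol_def using Y_deriv Y1_deriv by blast

lemma sol_cont:
  assumes "sol lam y y'"
  shows "continuous_on I y" "continuous_on I y'"
proof -
  have "\<And>x. x \<in> I \<Longrightarrow> (y has_real_derivative y' x) (at x within I)"
    "\<And>x. x \<in> I \<Longrightarrow> (y' has_real_derivative (a * x - lam) * y x) (at x within I)"
    using assms by (auto simp: sol_def)
  note A = this
  show "continuous_on I y" using A(1) by (rule DERIV_continuous_on)
  show "continuous_on I y'" using A(2) by (rule DERIV_continuous_on)
qed

lemma deriv_interior:
  assumes "(f has_real_derivative D) (at x within I)" "lo < x" "x < hi"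
  shows "(f has_real_derivative D) (at x)"
  using assms at_within_Icc_at unfolding I_def by metis

lemma incr_le:
  assumes der: "\<forall>x\<in>I. (f has_real_derivative f' x) (at x within I)"
    and st: "s \<in> I" "t \<in> I" "s \<le> t"
    and pos: "\<And>x. s < x \<Longrightarrow> x < t \<Longrightarrow> f' x \<ge> 0"
  shows "f s \<le> f t"
proof (rule DERIV_nonneg_imp_increasing_open[OF st(3)])
  fix x assume x: "s < x" "x < t"
  then have "lo < x" "x < hi" using st by (auto simp: I_iff)
  then have "(f has_real_derivative f' x) (at x)" using der deriv_interior x st by (auto simp: I_iff)
  then show "\<exists>y. (f has_real_derivative y) (at x) \<and> 0 \<le> y" using pos x by blast
next
  have "continuous_on I f" by (rule DERIV_continuous_on[where D=f']) (use der in auto)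
  then show "continuous_on {s..t} f" by (rule continuous_on_subset) (use st in \<open>auto simp: I_iff\<close>)
qed

lemma incr_less:
  assumes der: "\<forall>x\<in>I. (f has_real_derivative f' x) (at x within I)"
    and st: "s \<in> I" "t \<in> I" "s < t"
    and pos: "\<And>x. s < x \<Longrightarrow> x < t \<Longrightarrow> f' x > 0"
  shows "f s < f t"
proof (rule DERIV_pos_imp_increasing_open[OF st(3)])
  fix x assume x: "s < x" "x < t"
  then have "lo < x" "x < hi" using st by (auto simp: I_iff)
  then have "(f has_real_derivative f' x) (at x)" using der deriv_interior x st by (auto simp: I_iff)
  then show "\<exists>y. (f has_real_derivative y) (at x) \<and> 0 < y" using pos x by blast
next
  have "continuous_on I f" by (rule DERIV_continuous_on[where D=f']) (use der in auto)
  then show "continuous_on {s..t} f" by (rule continuous_on_subset) (use st in \<open>auto simp: I_iff\<close>)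
qed

lemma gron_fwd:
  assumes der: "\<forall>x\<in>I. (f has_real_derivative f' x) (at x within I)"
    and bd: "\<forall>x\<in>I. f' x \<le> K * f x + D" and K: "K > 0"
    and st: "s \<in> I" "t \<in> I" "s \<le> t"
  shows "f t + D / K \<le> (f s + D / K) * exp (K * (t - s))"
proof -
  define h where "h x = - (exp (- (K * x)) * (f x + D / K))" for x
  define h' where "h' x = - (exp (- (K * x)) * (f' x - K * f x - D))" for x
  have hd: "\<forall>x\<in>I. (h has_real_derivative h' x) (at x within I)"
  proof
    fix x assume x: "x \<in> I"
    have e: "((\<lambda>x. exp (- (K * x))) has_real_derivative exp (- (K * x)) * (- K)) (at x within I)"
      by (auto intro!: derivative_eq_intros)
    have f: "((\<lambda>x. f x + D / K) has_real_derivative f' x) (at x within I)"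
      using der x by (auto intro!: derivative_eq_intros)
    have "((\<lambda>x. - (exp (- (K * x)) * (f x + D / K))) has_real_derivative
        - (exp (- (K * x)) * (- K) * (f x + D / K) + f' x * exp (- (K * x)))) (at x within I)"
      by (rule DERIV_minus[OF DERIV_mult[OF e f]])
    moreover have "- (exp (- (K * x)) * (- K) * (f x + D / K) + f' x * exp (- (K * x))) = h' x"
      using K by (simp add: h'_def field_simps)
    ultimately show "(h has_real_derivative h' x) (at x within I)" by (simp add: h_def[abs_def])
  qed
  have "h s \<le> h t"
  proof (rule incr_le[OF hd st])
    fix x assume "s < x" "x < t"
    then have "x \<in> I" using st by (auto simp: I_iff)
    from bd this have "f' x \<le> K * f x + D" by blast
    then have "f' x - K * f x - D \<le> 0" by simp
    then show "h' x \<ge> 0" unfolding h'_def by (simp add: mult_nonneg_nonpos)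
  qed
  then have "exp (- (K * t)) * (f t + D / K) \<le> exp (- (K * s)) * (f s + D / K)" by (simp add: h_def)
  then have "exp (K * t) * (exp (- (K * t)) * (f t + D / K)) \<le> exp (K * t) * (exp (- (K * s)) * (f s + D / K))"
    by (rule mult_left_mono) simp_all
  moreover have "exp (K * t) * (exp (- (K * t)) * (f t + D / K)) = f t + D / K"
  proof -
    have "exp (K * t) * exp (- (K * t)) = 1" by (simp add: exp_minus)
    then show ?thesis by (metis mult.assoc mult_1)
  qed
  moreover have "exp (K * t) * (exp (- (K * s)) * (f s + D / K)) = (f s + D / K) * exp (K * (t - s))"
  proof -
    have "exp (K * t) * exp (- (K * s)) = exp (K * (t - s))" by (simp add: exp_add[symmetric] right_diff_distrib)
    then show ?thesis by (metis mult.assoc mult.commute)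
  qed
  ultimately show ?thesis by simp
qed

lemma gron_bwd:
  assumes der: "\<forall>x\<in>I. (f has_real_derivative f' x) (at x within I)"
    and bd: "\<forall>x\<in>I. f' x \<ge> - (K * f x)"
    and st: "s \<in> I" "t \<in> I" "s \<le> t"
  shows "f s \<le> f t * exp (K * (t - s))"
proof -
  define h where "h x = exp (K * x) * f x" for x
  define h' where "h' x = exp (K * x) * (f' x + K * f x)" for x
  have hd: "\<forall>x\<in>I. (h has_real_derivative h' x) (at x within I)"
  proof
    fix x assume x: "x \<in> I"
    have e: "((\<lambda>x. exp (K * x)) has_real_derivative exp (K * x) * K) (at x within I)"
      by (auto intro!: derivative_eq_intros)
    have f: "(f has_real_derivative f' x) (at x within I)" using der x by auto
    have "((\<lambda>x. exp (K * x) * f x) has_real_derivative exp (K * x) * K * f x + f' x * exp (K * x)) (at x within I)"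
      by (rule DERIV_mult[OF e f])
    moreover have "exp (K * x) * K * f x + f' x * exp (K * x) = h' x"
      by (simp add: h'_def field_simps)
    ultimately show "(h has_real_derivative h' x) (at x within I)" by (simp add: h_def[abs_def])
  qed
  have "h s \<le> h t"
  proof (rule incr_le[OF hd st])
    fix x assume "s < x" "x < t"
    then have "x \<in> I" using st by (auto simp: I_iff)
    from bd this have "f' x \<ge> - (K * f x)" by blast
    then have "f' x + K * f x \<ge> 0" by simp
    then show "h' x \<ge> 0" unfolding h'_def by simp
  qed
  then have "exp (K * s) * f s \<le> exp (K * t) * f t" by (simp add: h_def)
  then have "exp (- (K * s)) * (exp (K * s) * f s) \<le> exp (- (K * s)) * (exp (K * t) * f t)"
    by (rule mult_left_mono) simp_all
  moreover have "exp (- (K * s)) * (exp (K * s) * f s) = f s"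
  proof -
    have "exp (- (K * s)) * exp (K * s) = 1" by (simp add: exp_minus)
    then show ?thesis by (metis mult.assoc mult_1)
  qed
  moreover have "exp (- (K * s)) * (exp (K * t) * f t) = f t * exp (K * (t - s))"
  proof -
    have "exp (- (K * s)) * exp (K * t) = exp (K * (t - s))" by (simp add: exp_add[symmetric] right_diff_distrib)
    then show ?thesis by (metis mult.assoc mult.commute)
  qed
  ultimately show ?thesis by simp
qed

lemma q_bound: "x \<in> I \<Longrightarrow> \<bar>a * x - lam\<bar> \<le> \<bar>a\<bar> * L + \<bar>lam\<bar>"
proof -
  assume x: "x \<in> I"
  have "\<bar>x\<bar> \<le> L" using x by (rule I_abs)
  then have "\<bar>a * x\<bar> \<le> \<bar>a\<bar> * L" by (simp add: abs_mult mult_left_mono)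
  then show ?thesis by linarith
qed

lemma energy_deriv:
  assumes "sol lam y y'" "x \<in> I"
  shows "((\<lambda>x. (y x)\<^sup>2 + (y' x)\<^sup>2) has_real_derivative 2 * y x * y' x * (1 + (a * x - lam))) (at x within I)"
proof -
  have d1: "(y has_real_derivative y' x) (at x within I)" and d2: "(y' has_real_derivative (a * x - lam) * y x) (at x within I)"
    using assms unfolding sol_def by auto
  have "((\<lambda>x. y x * y x + y' x * y' x) has_real_derivative
      (y' x * y x + y' x * y x) + ((a * x - lam) * y x * y' x + (a * x - lam) * y x * y' x)) (at x within I)"
    by (intro DERIV_add DERIV_mult d1 d2)
  then show ?thesis by (simp add: algebra_simps power2_eq_square)
qed

lemma energy_bound:
  assumes "sol lam y y'" "x \<in> I"
  shows "\<bar>2 * y x * y' x * (1 + (a * x - lam))\<bar> \<le> (1 + \<bar>a\<bar> * L + \<bar>lam\<bar>) * ((y x)\<^sup>2 + (y' x)\<^sup>2)"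
proof -
  have "\<bar>2 * y x * y' x * (1 + (a * x - lam))\<bar> = \<bar>2 * y x * y' x\<bar> * \<bar>1 + (a * x - lam)\<bar>"
    by (simp add: abs_mult)
  also have "\<dots> \<le> ((y x)\<^sup>2 + (y' x)\<^sup>2) * (1 + \<bar>a\<bar> * L + \<bar>lam\<bar>)"
  proof (rule mult_mono)
    show "\<bar>1 + (a * x - lam)\<bar> \<le> 1 + \<bar>a\<bar> * L + \<bar>lam\<bar>" using q_bound[OF assms(2), of lam] by linarith
  qed (auto simp: abs_2xy)
  finally show ?thesis by (simp add: mult.commute)
qed

lemma uniq:
  assumes s: "sol lam y y'" and z: "z \<in> I" "y z = 0" "y' z = 0"
  shows "\<forall>x\<in>I. y x = 0 \<and> y' x = 0"
proof
  fix x assume x: "x \<in> I"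
  define E where "E x = (y x)\<^sup>2 + (y' x)\<^sup>2" for x
  define E' where "E' x = 2 * y x * y' x * (1 + (a * x - lam))" for x
  define K where "K = 1 + \<bar>a\<bar> * L + \<bar>lam\<bar>"
  have K: "K > 0" unfolding K_def using Lpos by (simp add: add_pos_nonneg)
  have der: "\<forall>x\<in>I. (E has_real_derivative E' x) (at x within I)"
    using energy_deriv[OF s] unfolding E_def[abs_def] E'_def by blast
  have bd: "\<forall>x\<in>I. \<bar>E' x\<bar> \<le> K * E x"
    using energy_bound[OF s] unfolding E_def E'_def K_def by blast
  have Ez: "E z = 0" using z by (simp add: E_def)
  have E0: "E x \<ge> 0" by (simp add: E_def)
  have b1: "\<forall>x\<in>I. E' x \<le> K * E x + 0"
  proof
    fix x assume "x \<in> I"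
    from bd this have "\<bar>E' x\<bar> \<le> K * E x" by blast
    then show "E' x \<le> K * E x + 0" by (simp add: abs_le_iff)
  qed
  have b2: "\<forall>x\<in>I. E' x \<ge> - (K * E x)"
  proof
    fix x assume "x \<in> I"
    from bd this have "\<bar>E' x\<bar> \<le> K * E x" by blast
    then show "E' x \<ge> - (K * E x)" by (simp add: abs_le_iff)
  qed
  have "E x \<le> 0"
  proof (cases "z \<le> x")
    case True
    have "E x + 0 / K \<le> (E z + 0 / K) * exp (K * (x - z))"
      by (rule gron_fwd[OF der b1 K z(1) x True])
    then show ?thesis using Ez by simp
  next
    case False
    then have zx: "x \<le> z" by simp
    have "E x \<le> E z * exp (K * (z - x))"
      by (rule gron_bwd[OF der b2 x z(1) zx])
    then show ?thesis using Ez by simp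
  qed
  then have "E x = 0" using E0 by simp
  then have "(y x)\<^sup>2 = 0 \<and> (y' x)\<^sup>2 = 0" unfolding E_def by (simp add: add_nonneg_eq_0_iff)
  then show "y x = 0 \<and> y' x = 0" by simp
qed

lemma sol_lin:
  assumes "sol lam y y'" "sol lam w w'"
  shows "sol lam (\<lambda>x. y x - c * w x) (\<lambda>x. y' x - c * w' x)"
  unfolding sol_def
proof
  fix x assume x: "x \<in> I"
  have d: "(y has_real_derivative y' x) (at x within I)" "(y' has_real_derivative (a * x - lam) * y x) (at x within I)"
     "(w has_real_derivative w' x) (at x within I)" "(w' has_real_derivative (a * x - lam) * w x) (at x within I)"
    using assms x unfolding sol_def by auto
  have "((\<lambda>x. y x - c * w x) has_real_derivative y' x - c * w' x) (at x within I)"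
    by (auto intro!: derivative_eq_intros d)
  moreover have "((\<lambda>x. y' x - c * w' x) has_real_derivative (a * x - lam) * y x - c * ((a * x - lam) * w x)) (at x within I)"
    by (auto intro!: derivative_eq_intros d)
  ultimately show "((\<lambda>x. y x - c * w x) has_real_derivative y' x - c * w' x) (at x within I) \<and>
      ((\<lambda>x. y' x - c * w' x) has_real_derivative (a * x - lam) * (y x - c * w x)) (at x within I)"
    by (simp add: algebra_simps)
qed

end


context rob begin

lemma energy_growth:
  assumes s: "sol lam y y'" and x: "x \<in> I"
  shows "(y x)\<^sup>2 + (y' x)\<^sup>2 \<le> ((y lo)\<^sup>2 + (y' lo)\<^sup>2) * exp ((1 + \<bar>a\<bar> * L + \<bar>lam\<bar>) * L)"
proof -
  define E where "E x = (y x)\<^sup>2 + (y' x)\<^sup>2" for x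
  define E' where "E' x = 2 * y x * y' x * (1 + (a * x - lam))" for x
  define K where "K = 1 + \<bar>a\<bar> * L + \<bar>lam\<bar>"
  have K: "K > 0" unfolding K_def using Lpos by (simp add: add_pos_nonneg)
  have der: "\<forall>x\<in>I. (E has_real_derivative E' x) (at x within I)"
    using energy_deriv[OF s] unfolding E_def[abs_def] E'_def by blast
  have bd: "\<forall>x\<in>I. \<bar>E' x\<bar> \<le> K * E x"
    using energy_bound[OF s] unfolding E_def E'_def K_def by blast
  have b1: "\<forall>x\<in>I. E' x \<le> K * E x + 0"
  proof
    fix x assume "x \<in> I"
    from bd this have "\<bar>E' x\<bar> \<le> K * E x" by blast
    then show "E' x \<le> K * E x + 0" by (simp add: abs_le_iff)
  qed
  have lx: "lo \<le> x" using x by (simp add: I_iff)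
  have "E x + 0 / K \<le> (E lo + 0 / K) * exp (K * (x - lo))"
    by (rule gron_fwd[OF der b1 K lo_I x lx])
  also have "\<dots> \<le> E lo * exp (K * L)"
  proof -
    have "x - lo \<le> L" using x hi_lo by (simp add: I_iff)
    then have "K * (x - lo) \<le> K * L" using K by (simp add: mult_left_mono)
    moreover have "E lo \<ge> 0" by (simp add: E_def)
    ultimately show ?thesis by (simp add: mult_left_mono)
  qed
  finally show ?thesis by (simp add: E_def K_def mult.commute)
qed

definition "KK Lam = 2 + \<bar>a\<bar> * L + Lam"
definition "BB Lam = (1 + al\<^sup>2) * exp ((1 + \<bar>a\<bar> * L + Lam) * L)"
definition "CC Lam = BB Lam * exp (KK Lam * L) / KK Lam"

lemma Y_bound:
  assumes "\<bar>lam\<bar> \<le> Lam" "x \<in> I"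
  shows "(Y lam x)\<^sup>2 \<le> BB Lam"
proof -
  have "(Y lam x)\<^sup>2 + (Y1 lam x)\<^sup>2 \<le> ((Y lam lo)\<^sup>2 + (Y1 lam lo)\<^sup>2) * exp ((1 + \<bar>a\<bar> * L + \<bar>lam\<bar>) * L)"
    by (rule energy_growth[OF Y_sol assms(2)])
  also have "\<dots> \<le> (1 + al\<^sup>2) * exp ((1 + \<bar>a\<bar> * L + Lam) * L)"
  proof -
    have "(1 + \<bar>a\<bar> * L + \<bar>lam\<bar>) * L \<le> (1 + \<bar>a\<bar> * L + Lam) * L"
      using assms(1) Lpos by (simp add: mult_right_mono)
    then have "exp ((1 + \<bar>a\<bar> * L + \<bar>lam\<bar>) * L) \<le> exp ((1 + \<bar>a\<bar> * L + Lam) * L)" by simp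
    then show ?thesis by (simp add: Y_lo Y1_lo mult_left_mono add_nonneg_nonneg)
  qed
  finally show ?thesis unfolding BB_def by (smt (verit) zero_le_power2)
qed

lemma Y_lip:
  assumes lam: "\<bar>lam\<bar> \<le> Lam" and mu: "\<bar>mu\<bar> \<le> Lam" and x: "x \<in> I"
  shows "(Y lam x - Y mu x)\<^sup>2 + (Y1 lam x - Y1 mu x)\<^sup>2 \<le> (lam - mu)\<^sup>2 * CC Lam"
proof -
  define d where "d x = Y lam x - Y mu x" for x
  define e where "e x = Y1 lam x - Y1 mu x" for x
  define E where "E x = (d x)\<^sup>2 + (e x)\<^sup>2" for x
  define E' where "E' x = 2 * d x * e x + 2 * e x * ((a * x - lam) * Y lam x - (a * x - mu) * Y mu x)" for x
  define K where "K = KK Lam"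
  define D where "D = (lam - mu)\<^sup>2 * BB Lam"
  have L0: "Lam \<ge> 0" using lam by linarith
  have K: "K > 0" unfolding K_def KK_def using Lpos L0 by (simp add: add_pos_nonneg)
  have D: "D \<ge> 0" unfolding D_def BB_def by simp
  have der: "\<forall>x\<in>I. (E has_real_derivative E' x) (at x within I)"
  proof
    fix x assume "x \<in> I"
    have dd: "(d has_real_derivative e x) (at x within I)"
      unfolding d_def[abs_def] e_def by (intro DERIV_diff Y_deriv)
    have de: "(e has_real_derivative ((a * x - lam) * Y lam x - (a * x - mu) * Y mu x)) (at x within I)"
      unfolding e_def[abs_def] by (intro DERIV_diff Y1_deriv)
    have "((\<lambda>x. d x * d x + e x * e x) has_real_derivative
      (e x * d x + e x * d x) + (((a * x - lam) * Y lam x - (a * x - mu) * Y mu x) * e x + ((a * x - lam) * Y lam x - (a * x - mu) * Y mu x) * e x)) (at x within I)"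
      by (intro DERIV_add DERIV_mult dd de)
    then show "(E has_real_derivative E' x) (at x within I)"
      unfolding E_def[abs_def] E'_def by (simp add: power2_eq_square algebra_simps)
  qed
  have b1: "\<forall>x\<in>I. E' x \<le> K * E x + D"
  proof
    fix x assume x: "x \<in> I"
    have q: "\<bar>a * x - lam\<bar> \<le> \<bar>a\<bar> * L + Lam" using q_bound[OF x, of lam] lam by linarith
    have eq: "E' x = 2 * d x * e x * (1 + (a * x - lam)) + 2 * e x * ((mu - lam) * Y mu x)"
      unfolding E'_def d_def e_def by (simp add: algebra_simps)
    have t1: "2 * d x * e x * (1 + (a * x - lam)) \<le> (1 + \<bar>a\<bar> * L + Lam) * E x"
    proof -
      have "2 * d x * e x * (1 + (a * x - lam)) \<le> \<bar>2 * d x * e x\<bar> * \<bar>1 + (a * x - lam)\<bar>"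
        by (metis abs_ge_self abs_mult)
      also have "\<dots> \<le> E x * (1 + \<bar>a\<bar> * L + Lam)"
        by (rule mult_mono) (use q abs_2xy in \<open>auto simp: E_def\<close>)
      finally show ?thesis by (simp add: mult.commute)
    qed
    have t2: "2 * e x * ((mu - lam) * Y mu x) \<le> E x + D"
    proof -
      have "2 * e x * ((mu - lam) * Y mu x) \<le> (e x)\<^sup>2 + ((mu - lam) * Y mu x)\<^sup>2"
        by (rule sum_squares_bound)
      also have "((mu - lam) * Y mu x)\<^sup>2 = (lam - mu)\<^sup>2 * (Y mu x)\<^sup>2"
        by (simp add: power_mult_distrib power2_commute)
      also have "(lam - mu)\<^sup>2 * (Y mu x)\<^sup>2 \<le> D"
        unfolding D_def by (rule mult_left_mono[OF Y_bound[OF mu x]]) simp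
      finally show ?thesis unfolding E_def using zero_le_power2[of "d x"] by linarith
    qed
    have "E' x \<le> (1 + \<bar>a\<bar> * L + Lam) * E x + E x + D" using eq t1 t2 by linarith
    then show "E' x \<le> K * E x + D" by (simp add: K_def KK_def algebra_simps)
  qed
  have lx: "lo \<le> x" using x by (simp add: I_iff)
  have E0: "E lo = 0" by (simp add: E_def d_def e_def Y_lo Y1_lo)
  have "E x + D / K \<le> (E lo + D / K) * exp (K * (x - lo))"
    by (rule gron_fwd[OF der b1 K lo_I x lx])
  also have "\<dots> \<le> D / K * exp (K * L)"
  proof -
    have "x - lo \<le> L" using x hi_lo by (simp add: I_iff)
    then have "K * (x - lo) \<le> K * L" using K by (simp add: mult_left_mono)
    then have "exp (K * (x - lo)) \<le> exp (K * L)" by simp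
    then have "D * exp (K * (x - lo)) / K \<le> D * exp (K * L) / K"
      by (intro divide_right_mono mult_left_mono) (use D K in auto)
    then show ?thesis using E0 by simp
  qed
  finally have "E x \<le> D / K * exp (K * L)" using D K by (smt (verit) divide_nonneg_pos)
  then show ?thesis unfolding E_def d_def e_def D_def CC_def K_def by (simp add: mult.assoc)
qed

lemma CC_nonneg: "Lam \<ge> 0 \<Longrightarrow> CC Lam \<ge> 0"
  unfolding CC_def BB_def KK_def using Lpos by (simp add: add_nonneg_nonneg)

lemma sq_less: "(d::real)\<^sup>2 < e\<^sup>2 \<Longrightarrow> e > 0 \<Longrightarrow> \<bar>d\<bar> < e"
  by (metis abs_of_pos power2_abs power_less_imp_less_base abs_ge_zero less_le)

lemma Y_cont:
  assumes e: "\<epsilon> > 0"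
  shows "\<exists>\<delta>>0. \<forall>mu. \<bar>mu - lam\<bar> < \<delta> \<longrightarrow> (\<forall>x\<in>I. \<bar>Y mu x - Y lam x\<bar> < \<epsilon> \<and> \<bar>Y1 mu x - Y1 lam x\<bar> < \<epsilon>)"
proof -
  define Lam where "Lam = \<bar>lam\<bar> + 1"
  define C where "C = CC Lam"
  have C: "C \<ge> 0" unfolding C_def Lam_def by (rule CC_nonneg) simp
  define \<delta> where "\<delta> = min 1 (\<epsilon> / (C + 1))"
  have dpos: "\<delta> > 0" unfolding \<delta>_def using e C by simp
  show ?thesis
  proof (intro exI[of _ \<delta>] conjI[OF dpos] allI impI ballI)
    fix mu x assume mu: "\<bar>mu - lam\<bar> < \<delta>" and x: "x \<in> I"
    have mL: "\<bar>mu\<bar> \<le> Lam" using mu unfolding Lam_def \<delta>_def by linarith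
    have lL: "\<bar>lam\<bar> \<le> Lam" unfolding Lam_def by simp
    have lip: "(Y mu x - Y lam x)\<^sup>2 + (Y1 mu x - Y1 lam x)\<^sup>2 \<le> (mu - lam)\<^sup>2 * C"
      unfolding C_def by (rule Y_lip[OF mL lL x])
    have "\<bar>mu - lam\<bar> * (C + 1) < \<epsilon>"
    proof -
      have "\<bar>mu - lam\<bar> < \<epsilon> / (C + 1)" using mu unfolding \<delta>_def by linarith
      then show ?thesis using C by (simp add: less_divide_eq)
    qed
    then have "(\<bar>mu - lam\<bar> * (C + 1))\<^sup>2 < \<epsilon>\<^sup>2"
      by (intro power_strict_mono) (use C in auto)
    moreover have "(mu - lam)\<^sup>2 * C \<le> (\<bar>mu - lam\<bar> * (C + 1))\<^sup>2"
    proof -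
      have "C \<le> (C + 1)\<^sup>2" using C by (simp add: power2_eq_square algebra_simps)
      then have "(mu - lam)\<^sup>2 * C \<le> (mu - lam)\<^sup>2 * (C + 1)\<^sup>2" by (simp add: mult_left_mono)
      then show ?thesis by (simp add: power_mult_distrib)
    qed
    ultimately have "(Y mu x - Y lam x)\<^sup>2 + (Y1 mu x - Y1 lam x)\<^sup>2 < \<epsilon>\<^sup>2" using lip by linarith
    then have "(Y mu x - Y lam x)\<^sup>2 < \<epsilon>\<^sup>2" "(Y1 mu x - Y1 lam x)\<^sup>2 < \<epsilon>\<^sup>2"
      by (smt (verit) zero_le_power2)+
    then show "\<bar>Y mu x - Y lam x\<bar> < \<epsilon> \<and> \<bar>Y1 mu x - Y1 lam x\<bar> < \<epsilon>" using e sq_less by blast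
  qed
qed

lemma g_cont: "isCont g lam"
  unfolding isCont_def LIM_eq
proof (intro allI impI)
  fix r :: real assume r: "r > 0"
  define \<epsilon> where "\<epsilon> = r / (1 + \<bar>be\<bar>)"
  have e: "\<epsilon> > 0" unfolding \<epsilon>_def using r by (simp add: add_pos_nonneg)
  obtain \<delta> where d: "\<delta> > 0" and H: "\<forall>mu. \<bar>mu - lam\<bar> < \<delta> \<longrightarrow> (\<forall>x\<in>I. \<bar>Y mu x - Y lam x\<bar> < \<epsilon> \<and> \<bar>Y1 mu x - Y1 lam x\<bar> < \<epsilon>)"
    using Y_cont[OF e, of lam] by blast
  show "\<exists>s>0. \<forall>x. x \<noteq> lam \<and> norm (x - lam) < s \<longrightarrow> norm (g x - g lam) < r"
  proof (intro exI[of _ \<delta>] conjI allI impI d)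
    fix mu assume "mu \<noteq> lam \<and> norm (mu - lam) < \<delta>"
    then have "\<bar>mu - lam\<bar> < \<delta>" by simp
    then have h1: "\<bar>Y mu hi - Y lam hi\<bar> < \<epsilon>" and h2: "\<bar>Y1 mu hi - Y1 lam hi\<bar> < \<epsilon>" using H hi_I by auto
    have tri: "\<bar>g mu - g lam\<bar> \<le> \<bar>Y1 mu hi - Y1 lam hi\<bar> + \<bar>be\<bar> * \<bar>Y mu hi - Y lam hi\<bar>"
    proof -
      have "g mu - g lam = (Y1 mu hi - Y1 lam hi) + be * (Y mu hi - Y lam hi)" unfolding g_def by (simp add: algebra_simps)
      then show ?thesis by (metis abs_mult abs_triangle_ineq)
    qed
    have "\<bar>be\<bar> * \<bar>Y mu hi - Y lam hi\<bar> \<le> \<bar>be\<bar> * \<epsilon>" using h1 by (simp add: mult_left_mono)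
    then have "\<bar>g mu - g lam\<bar> < \<epsilon> + \<bar>be\<bar> * \<epsilon>" using tri h2 by linarith
    also have "\<epsilon> + \<bar>be\<bar> * \<epsilon> = r" unfolding \<epsilon>_def
    proof -
      have "1 + \<bar>be\<bar> > 0" by (simp add: add_pos_nonneg)
      have "r / (1 + \<bar>be\<bar>) + \<bar>be\<bar> * (r / (1 + \<bar>be\<bar>)) = (1 + \<bar>be\<bar>) * (r / (1 + \<bar>be\<bar>))"
        by (simp add: distrib_right add_divide_distrib)
      then show "r / (1 + \<bar>be\<bar>) + \<bar>be\<bar> * (r / (1 + \<bar>be\<bar>)) = r" using \<open>1 + \<bar>be\<bar> > 0\<close> by simp
    qed
    finally show "norm (g mu - g lam) < r" by simp
  qed
qed

end


context rob begin

lemma I_eq: "{- L / 2 .. L / 2} = I" by (simp add: I_def lo_def hi_def)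

lemma eig_Y:
  assumes "robin_eigenpair L a al be lam u"
  shows "u lo \<noteq> 0 \<and> (\<forall>x\<in>I. u x = u lo * Y lam x) \<and> g lam = 0"
proof -
  obtain x0 u' u'' where x0: "x0 \<in> I" "u x0 \<noteq> 0"
    and D: "\<forall>x\<in>I. (u has_real_derivative u' x) (at x within I) \<and>
            (u' has_real_derivative u'' x) (at x within I) \<and> - u'' x + a * x * u x = lam * u x"
    and b1: "u' lo = al * u lo" and b2: "u' hi = - be * u hi"
    using assms unfolding robin_eigenpair_def I_eq lo_def[symmetric] hi_def[symmetric] I_def[symmetric] by blast
  have s: "sol lam u u'" unfolding sol_def
  proof
    fix x assume x: "x \<in> I"
    have e: "- u'' x + a * x * u x = lam * u x" using D x by blast
    have "(a * x - lam) * u x = a * x * u x - lam * u x" by (simp add: left_diff_distrib)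
    then have "u'' x = (a * x - lam) * u x" using e by linarith
    then show "(u has_real_derivative u' x) (at x within I) \<and> (u' has_real_derivative (a * x - lam) * u x) (at x within I)"
      using D x by metis
  qed
  have sd: "sol lam (\<lambda>x. u x - u lo * Y lam x) (\<lambda>x. u' x - u lo * Y1 lam x)"
    by (rule sol_lin[OF s Y_sol])
  have "\<forall>x\<in>I. u x - u lo * Y lam x = 0 \<and> u' x - u lo * Y1 lam x = 0"
    by (rule uniq[OF sd lo_I]) (simp_all add: Y_lo Y1_lo b1)
  then have U: "\<forall>x\<in>I. u x = u lo * Y lam x" and U': "\<forall>x\<in>I. u' x = u lo * Y1 lam x" by auto
  have nz: "u lo \<noteq> 0" using U x0 by force
  have "u lo * Y1 lam hi = - be * (u lo * Y lam hi)" using U U' b2 hi_I by metis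
  then have "u lo * (Y1 lam hi + be * Y lam hi) = 0" by (simp add: algebra_simps)
  then have "g lam = 0" using nz by (simp add: g_def)
  then show ?thesis using nz U by blast
qed

lemma Y_eig:
  assumes "g lam = 0"
  shows "robin_eigenvalue L a al be lam"
  unfolding robin_eigenvalue_def robin_eigenpair_def I_eq
proof (intro exI conjI)
  show "\<exists>x\<in>I. Y lam x \<noteq> 0" by (rule bexI[of _ lo]) (simp_all add: Y_lo lo_I)
  show "\<forall>x\<in>I. (Y lam has_real_derivative Y1 lam x) (at x within I) \<and>
      (Y1 lam has_real_derivative (a * x - lam) * Y lam x) (at x within I) \<and>
      - ((a * x - lam) * Y lam x) + a * x * Y lam x = lam * Y lam x"
    using Y_deriv Y1_deriv by (simp add: algebra_simps)
  show "Y1 lam (- L / 2) = al * Y lam (- L / 2)" using Y_lo Y1_lo by (simp add: lo_def)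
  show "Y1 lam (L / 2) = - be * Y lam (L / 2)" using assms by (simp add: g_def hi_def algebra_simps)
qed

lemma wronsk:
  assumes "sol lam y y'" "sol mu w w'" "x \<in> I"
  shows "((\<lambda>x. y x * w' x - y' x * w x) has_real_derivative (lam - mu) * y x * w x) (at x within I)"
proof -
  have d: "(y has_real_derivative y' x) (at x within I)" "(y' has_real_derivative (a * x - lam) * y x) (at x within I)"
     "(w has_real_derivative w' x) (at x within I)" "(w' has_real_derivative (a * x - mu) * w x) (at x within I)"
    using assms unfolding sol_def by auto
  have "((\<lambda>x. y x * w' x - y' x * w x) has_real_derivative
     (y' x * w' x + (a * x - mu) * w x * y x) - ((a * x - lam) * y x * w x + w' x * y' x)) (at x within I)"
    by (intro DERIV_diff DERIV_mult d)
  then show ?thesis by (simp add: algebra_simps)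
qed

lemma Y_nz: "z \<in> I \<Longrightarrow> Y lam z = 0 \<Longrightarrow> Y1 lam z = 0 \<Longrightarrow> False"
  using uniq[OF Y_sol, of z lam] lo_I Y_lo by fastforce

lemma Y_cont_x: "continuous_on I (Y lam)" "continuous_on I (Y1 lam)"
  using sol_cont[OF Y_sol] by auto

lemma dl_pos:
  assumes "(f has_real_derivative D) (at z within I)" "D > 0" "z \<in> I" "w \<in> I" "w < z"
  shows "\<exists>x. w < x \<and> x < z \<and> f x < f z"
proof -
  obtain d where d: "d > 0" "\<forall>h>0. z - h \<in> I \<longrightarrow> h < d \<longrightarrow> f (z - h) < f z"
    using has_real_derivative_pos_inc_left[OF assms(1,2)] by blast
  define h where "h = min (d / 2) ((z - w) / 2)"
  have h: "h > 0" "h < d" "h < z - w" using d assms unfolding h_def by (auto simp: min_def)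
  have zI: "z - h \<in> I" using assms h by (auto simp: I_iff)
  show ?thesis using d h zI by (intro exI[of _ "z - h"]) auto
qed

lemma dl_neg:
  assumes "(f has_real_derivative D) (at z within I)" "D < 0" "z \<in> I" "w \<in> I" "w < z"
  shows "\<exists>x. w < x \<and> x < z \<and> f x > f z"
proof -
  obtain d where d: "d > 0" "\<forall>h>0. z - h \<in> I \<longrightarrow> h < d \<longrightarrow> f z < f (z - h)"
    using has_real_derivative_neg_dec_left[OF assms(1,2)] by blast
  define h where "h = min (d / 2) ((z - w) / 2)"
  have h: "h > 0" "h < d" "h < z - w" using d assms unfolding h_def by (auto simp: min_def)
  have zI: "z - h \<in> I" using assms h by (auto simp: I_iff)
  show ?thesis using d h zI by (intro exI[of _ "z - h"]) auto
qed

lemma dr_neg: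
  assumes "(f has_real_derivative D) (at z within I)" "D < 0" "z \<in> I" "w \<in> I" "z < w"
  shows "\<exists>x. z < x \<and> x < w \<and> f x < f z"
proof -
  obtain d where d: "d > 0" "\<forall>h>0. z + h \<in> I \<longrightarrow> h < d \<longrightarrow> f z > f (z + h)"
    using has_real_derivative_neg_dec_right[OF assms(1,2)] by blast
  define h where "h = min (d / 2) ((w - z) / 2)"
  have h: "h > 0" "h < d" "h < w - z" using d assms unfolding h_def by (auto simp: min_def)
  have zI: "z + h \<in> I" using assms h by (auto simp: I_iff)
  show ?thesis using d h zI by (intro exI[of _ "z + h"]) auto
qed

lemma dr_pos:
  assumes "(f has_real_derivative D) (at z within I)" "D > 0" "z \<in> I" "w \<in> I" "z < w"
  shows "\<exists>x. z < x \<and> x < w \<and> f x > f z"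
proof -
  obtain d where d: "d > 0" "\<forall>h>0. z + h \<in> I \<longrightarrow> h < d \<longrightarrow> f z < f (z + h)"
    using has_real_derivative_pos_inc_right[OF assms(1,2)] by blast
  define h where "h = min (d / 2) ((w - z) / 2)"
  have h: "h > 0" "h < d" "h < w - z" using d assms unfolding h_def by (auto simp: min_def)
  have zI: "z + h \<in> I" using assms h by (auto simp: I_iff)
  show ?thesis using d h zI by (intro exI[of _ "z + h"]) auto
qed

lemma locmin:
  assumes "(f has_real_derivative D) (at z within I)" "w1 \<in> I" "w2 \<in> I" "w1 < z" "z < w2"
    and "\<forall>y. w1 < y \<and> y < w2 \<longrightarrow> f y \<ge> f z"
  shows "D = 0"
proof -
  have zI: "z \<in> I" using assms by (auto simp: I_iff)
  have "\<not> D > 0"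
  proof
    assume "D > 0"
    then obtain x where x: "w1 < x" "x < z" "f x < f z" using dl_pos[OF assms(1) _ zI assms(2,4)] by blast
    have "x < w2" using x assms(5) by simp
    then have "f x \<ge> f z" using assms(6) x(1) by blast
    then show False using x by simp
  qed
  moreover have "\<not> D < 0"
  proof
    assume "D < 0"
    then obtain x where x: "z < x" "x < w2" "f x < f z" using dr_neg[OF assms(1) _ zI assms(3,5)] by blast
    have "w1 < x" using x assms(4) by simp
    then have "f x \<ge> f z" using assms(6) x(2) by blast
    then show False using x by simp
  qed
  ultimately show ?thesis by simp
qed

lemma locmax:
  assumes "(f has_real_derivative D) (at z within I)" "w1 \<in> I" "w2 \<in> I" "w1 < z" "z < w2"
    and "\<forall>y. w1 < y \<and> y < w2 \<longrightarrow> f y \<le> f z"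
  shows "D = 0"
proof -
  have "- D = 0"
    by (rule locmin[OF DERIV_minus[OF assms(1)] assms(2-5)]) (use assms(6) in auto)
  then show ?thesis by simp
qed

lemma first_zero:
  fixes f :: "real \<Rightarrow> real"
  assumes c: "continuous_on I f" and f0: "f lo > 0" and ex: "\<exists>x\<in>I. f x \<le> 0"
  shows "\<exists>z\<in>I. lo < z \<and> f z = 0 \<and> (\<forall>x. lo \<le> x \<and> x < z \<longrightarrow> f x > 0)"
proof -
  define Z where "Z = I \<inter> f -` {..0}"
  have cI: "closed I" by (simp add: I_def)
  have cl: "closed Z" unfolding Z_def using continuous_closed_preimage[OF c cI, of "{..0}"] by simp
  have ne: "Z \<noteq> {}" using ex by (auto simp: Z_def)
  have bb: "bdd_below Z" unfolding Z_def by (rule bdd_belowI[of _ lo]) (auto simp: I_iff)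
  define z where "z = Inf Z"
  have zZ: "z \<in> Z" unfolding z_def by (rule closed_contains_Inf[OF ne bb cl])
  have zI: "z \<in> I" and fz: "f z \<le> 0" using zZ by (auto simp: Z_def)
  have below: "f x > 0" if "lo \<le> x" "x < z" for x
  proof (rule ccontr)
    assume "\<not> f x > 0"
    then have "x \<in> Z" using that zI by (auto simp: Z_def I_iff)
    then have "z \<le> x" unfolding z_def by (rule cInf_lower[OF _ bb])
    then show False using that by simp
  qed
  have "lo \<le> z" using zI by (simp add: I_iff)
  moreover have "z \<noteq> lo" using fz f0 by auto
  ultimately have lz: "lo < z" by simp
  have "f z = 0"
  proof (rule ccontr)
    assume "f z \<noteq> 0"
    then have "f z < 0" using fz by simp
    have "continuous_on {lo..z} f" by (rule continuous_on_subset[OF c]) (use zI in \<open>auto simp: I_iff\<close>)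
    then obtain w where w: "lo \<le> w" "w \<le> z" "f w = 0"
      using IVT2'[of f z 0 lo] \<open>f z < 0\<close> f0 lz by auto
    then have "w < z" using \<open>f z \<noteq> 0\<close> by (metis order_le_less)
    then show False using below w by force
  qed
  then show ?thesis using zI lz below by blast
qed

definition "pos lam \<longleftrightarrow> (\<forall>x\<in>I. Y lam x > 0)"

lemma pos_down:
  assumes lm: "lam < mu" and pm: "pos mu"
  shows "pos lam"
proof (rule ccontr)
  assume "\<not> pos lam"
  then have "\<exists>x\<in>I. Y lam x \<le> 0" unfolding pos_def by (meson not_less)
  then obtain z where zI: "z \<in> I" and lz: "lo < z" and yz: "Y lam z = 0" and bel: "\<forall>x. lo \<le> x \<and> x < z \<longrightarrow> Y lam x > 0"
    using first_zero[OF Y_cont_x(1)] Y_lo by force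
  define W where "W x = Y lam x * Y1 mu x - Y1 lam x * Y mu x" for x
  have Wd: "\<forall>x\<in>I. (W has_real_derivative (lam - mu) * Y lam x * Y mu x) (at x within I)"
    unfolding W_def[abs_def] using wronsk[OF Y_sol Y_sol] by blast
  have "W z < W lo"
  proof -
    have "(\<lambda>x. - W x) lo < (\<lambda>x. - W x) z"
    proof (rule incr_less[where f="\<lambda>x. - W x" and f'="\<lambda>x. - ((lam - mu) * Y lam x * Y mu x)"])
      show "\<forall>x\<in>I. ((\<lambda>x. - W x) has_real_derivative - ((lam - mu) * Y lam x * Y mu x)) (at x within I)"
        using Wd by (auto intro: DERIV_minus)
      fix x assume x: "lo < x" "x < z"
      then have "x \<in> I" using zI by (auto simp: I_iff)
      then have "Y mu x > 0" using pm by (auto simp: pos_def)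
      moreover have "Y lam x > 0" using bel x by auto
      ultimately show "- ((lam - mu) * Y lam x * Y mu x) > 0" using lm by (simp add: mult_neg_pos)
    qed (use zI lz lo_I in auto)
    then show ?thesis by simp
  qed
  moreover have "W lo = 0" by (simp add: W_def Y_lo Y1_lo)
  moreover have "Y1 lam z \<le> 0"
  proof (rule ccontr)
    assume "\<not> Y1 lam z \<le> 0"
    then obtain x where x: "lo < x" "x < z" "Y lam x < Y lam z" using dl_pos[OF Y_deriv _ zI lo_I lz] by force
    have "Y lam x > 0" using bel x by auto
    then show False using x yz by simp
  qed
  moreover have "Y mu z > 0" using pm zI by (auto simp: pos_def)
  moreover have "W z = - (Y1 lam z * Y mu z)" by (simp add: W_def yz)
  ultimately show False using mult_nonpos_nonneg[of "Y1 lam z" "Y mu z"] by linarith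
qed

lemma pos_open:
  assumes "pos lam"
  shows "\<exists>\<delta>>0. \<forall>mu. \<bar>mu - lam\<bar> < \<delta> \<longrightarrow> pos mu"
proof -
  obtain xm where xm: "xm \<in> I" "\<forall>y\<in>I. Y lam xm \<le> Y lam y"
    using continuous_attains_inf[of I "Y lam"] Y_cont_x lo_I by (auto simp: I_def)
  have m: "Y lam xm > 0" using assms xm by (auto simp: pos_def)
  obtain \<delta> where d: "\<delta> > 0" "\<forall>mu. \<bar>mu - lam\<bar> < \<delta> \<longrightarrow> (\<forall>x\<in>I. \<bar>Y mu x - Y lam x\<bar> < Y lam xm \<and> \<bar>Y1 mu x - Y1 lam x\<bar> < Y lam xm)"
    using Y_cont[OF m] by blast
  show ?thesis
  proof (intro exI[of _ \<delta>] conjI[OF d(1)] allI impI)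
    fix mu assume "\<bar>mu - lam\<bar> < \<delta>"
    then have "\<forall>x\<in>I. \<bar>Y mu x - Y lam x\<bar> < Y lam xm" using d by blast
    then show "pos mu" unfolding pos_def using xm by force
  qed
qed

end


context rob begin

lemma closed_neg: "continuous_on I f \<Longrightarrow> closed (I \<inter> f -` {..(0::real)})"
proof -
  assume c: "continuous_on I f"
  have cI: "closed I" by (simp add: I_def)
  show ?thesis using continuous_closed_preimage[OF c cI, of "{..0}"] by simp
qed

lemma neg_exists: "\<exists>lam. pos lam \<and> g lam > 0"
proof -
  define s where "s = (\<bar>al\<bar> + \<bar>be\<bar> + 2) / L"
  define P0 where "P0 = 2 * \<bar>al\<bar> + \<bar>be\<bar> + 3"
  define lam where "lam = - (s + P0\<^sup>2 + 1 + \<bar>a\<bar> * L)"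
  define \<phi> where "\<phi> x = al - 1 + s * (x - lo)" for x
  define F where "F x = Y1 lam x - \<phi> x * Y lam x" for x
  define F' where "F' x = (a * x - lam - s - (\<phi> x)\<^sup>2) * Y lam x - \<phi> x * F x" for x
  have sL: "s * L = \<bar>al\<bar> + \<bar>be\<bar> + 2" using Lpos by (simp add: s_def)
  have s0: "s > 0" using Lpos by (simp add: s_def add_pos_nonneg)
  have phib: "\<bar>\<phi> x\<bar> \<le> P0" if x: "x \<in> I" for x
  proof -
    have "0 \<le> x - lo" "x - lo \<le> L" using x hi_lo by (auto simp: I_iff)
    then have "0 \<le> s * (x - lo)" "s * (x - lo) \<le> s * L" using s0 by (auto simp: mult_left_mono)
    then show ?thesis unfolding \<phi>_def P0_def using sL by linarith
  qed
  have qbig: "a * x - lam - s - (\<phi> x)\<^sup>2 > 0" if x: "x \<in> I" for x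
  proof -
    have "\<bar>a * x\<bar> \<le> \<bar>a\<bar> * L" using I_abs[OF x] by (simp add: abs_mult mult_left_mono)
    moreover have "(\<phi> x)\<^sup>2 \<le> P0\<^sup>2"
    proof -
      have "\<bar>\<phi> x\<bar>\<^sup>2 \<le> P0\<^sup>2" by (rule power_mono[OF phib[OF x]]) simp
      then show ?thesis by simp
    qed
    ultimately show ?thesis unfolding lam_def by (smt (verit))
  qed
  have Fd: "\<forall>x\<in>I. (F has_real_derivative F' x) (at x within I)"
  proof
    fix x assume x: "x \<in> I"
    have p: "(\<phi> has_real_derivative s) (at x within I)"
      unfolding \<phi>_def[abs_def] by (auto intro!: derivative_eq_intros)
    have "(F has_real_derivative (a * x - lam) * Y lam x - (s * Y lam x + Y1 lam x * \<phi> x)) (at x within I)"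
      unfolding F_def[abs_def] by (intro DERIV_diff DERIV_mult p Y_deriv Y1_deriv)
    moreover have "(a * x - lam) * Y lam x - (s * Y lam x + Y1 lam x * \<phi> x) = F' x"
      by (simp add: F'_def F_def power2_eq_square algebra_simps)
    ultimately show "(F has_real_derivative F' x) (at x within I)" by simp
  qed
  have Fc: "continuous_on I F" by (rule DERIV_continuous_on[where D=F']) (use Fd in auto)
  have Yc: "continuous_on I (Y lam)" by (rule Y_cont_x)
  have F0: "F lo = 1" by (simp add: F_def \<phi>_def Y_lo Y1_lo)
  have all: "\<forall>x\<in>I. Y lam x > 0 \<and> F x > 0"
  proof (rule ccontr)
    assume na: "\<not> (\<forall>x\<in>I. Y lam x > 0 \<and> F x > 0)"
    define Z where "Z = (I \<inter> Y lam -` {..0}) \<union> (I \<inter> F -` {..0})"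
    have cl: "closed Z" unfolding Z_def by (intro closed_Un closed_neg Yc Fc)
    have ne: "Z \<noteq> {}" using na unfolding Z_def by (auto simp: not_less)
    have bb: "bdd_below Z" unfolding Z_def by (rule bdd_belowI[of _ lo]) (auto simp: I_iff)
    define z where "z = Inf Z"
    have zZ: "z \<in> Z" unfolding z_def by (rule closed_contains_Inf[OF ne bb cl])
    have zI: "z \<in> I" using zZ by (auto simp: Z_def)
    have below: "Y lam x > 0 \<and> F x > 0" if "lo \<le> x" "x < z" for x
    proof (rule ccontr)
      assume "\<not> (Y lam x > 0 \<and> F x > 0)"
      then have "x \<in> Z" using that zI by (auto simp: Z_def I_iff not_less)
      then have "z \<le> x" unfolding z_def by (rule cInf_lower[OF _ bb])
      then show False using that by simp
    qed
    have "lo \<notin> Z" using Y_lo F0 by (auto simp: Z_def)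
    then have "z \<noteq> lo" using zZ by auto
    then have lz: "lo < z" using zI by (simp add: I_iff)
    have clz: "{lo..z} \<subseteq> I" using zI by (auto simp: I_iff)
    have Yz: "Y lam z \<ge> 0"
    proof (rule ccontr)
      assume "\<not> Y lam z \<ge> 0"
      then obtain w where w: "lo \<le> w" "w \<le> z" "Y lam w = 0"
        using IVT2'[of "Y lam" z 0 lo] Y_lo lz continuous_on_subset[OF Yc clz] by force
      then have "w < z" using \<open>\<not> Y lam z \<ge> 0\<close> by (metis order_le_less order_refl)
      then show False using below[OF w(1)] w by simp
    qed
    have Fz: "F z \<ge> 0"
    proof (rule ccontr)
      assume "\<not> F z \<ge> 0"
      then obtain w where w: "lo \<le> w" "w \<le> z" "F w = 0"
        using IVT2'[of F z 0 lo] F0 lz continuous_on_subset[OF Fc clz] by force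
      then have "w < z" using \<open>\<not> F z \<ge> 0\<close> by (metis order_le_less order_refl)
      then show False using below[OF w(1)] w by simp
    qed
    show False
    proof (cases "Y lam z = 0")
      case True
      have "Y1 lam z = F z" using True by (simp add: F_def)
      show False
      proof (cases "F z = 0")
        case True
        then show False using Y_nz[OF zI] \<open>Y lam z = 0\<close> \<open>Y1 lam z = F z\<close> by simp
      next
        case False
        then have "Y1 lam z > 0" using Fz \<open>Y1 lam z = F z\<close> by simp
        then obtain x where x: "lo < x" "x < z" "Y lam x < Y lam z" using dl_pos[OF Y_deriv _ zI lo_I lz] by force
        then show False using below[of x] True by simp
      qed
    next
      case False
      then have Ypos: "Y lam z > 0" using Yz by simp
      then have "F z \<le> 0" using zZ by (auto simp: Z_def)
      then have Fz0: "F z = 0" using Fz by simp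
      have "F' z > 0" unfolding F'_def using Fz0 qbig[OF zI] Ypos by simp
      then obtain x where x: "lo < x" "x < z" "F x < F z" using dl_pos[of F "F' z" z lo] Fd zI lo_I lz by blast
      then show False using below[of x] Fz0 by simp
    qed
  qed
  have "pos lam" using all by (simp add: pos_def)
  moreover have "g lam > 0"
  proof -
    have "\<phi> hi = al - 1 + s * L" by (simp add: \<phi>_def hi_lo)
    then have ph: "\<phi> hi + be \<ge> 1" using sL by linarith
    have "g lam = F hi + (\<phi> hi + be) * Y lam hi" by (simp add: g_def F_def algebra_simps)
    moreover have "F hi > 0" "Y lam hi > 0" using all hi_I by auto
    moreover have "(\<phi> hi + be) * Y lam hi > 0" using ph \<open>Y lam hi > 0\<close> by simp
    ultimately show ?thesis by simp
  qed
  ultimately show ?thesis by blast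
qed

end


context rob begin

definition "lstar = Sup (Collect pos)"

lemma S_ne: "Collect pos \<noteq> {}" using neg_exists by auto

lemma S_bdd: assumes "\<not> pos b" shows "bdd_above (Collect pos)"
proof (rule bdd_aboveI[of _ b])
  fix lam assume "lam \<in> Collect pos"
  then have p: "pos lam" by simp
  show "lam \<le> b"
  proof (rule ccontr)
    assume "\<not> lam \<le> b"
    then have "b < lam" by simp
    then show False using pos_down[OF _ p] assms by blast
  qed
qed

lemma S_char: assumes "\<not> pos b" shows "pos lam \<longleftrightarrow> lam < lstar"
proof
  assume p: "pos lam"
  have le: "lam \<le> lstar" unfolding lstar_def by (rule cSup_upper) (use p S_bdd[OF assms] in auto)
  obtain \<delta> where d: "\<delta> > 0" "\<forall>mu. \<bar>mu - lam\<bar> < \<delta> \<longrightarrow> pos mu" using pos_open[OF p] by blast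
  have pd: "pos (lam + \<delta> / 2)" using d by simp
  have "lam + \<delta> / 2 \<le> lstar" unfolding lstar_def by (rule cSup_upper) (use pd S_bdd[OF assms] in auto)
  then show "lam < lstar" using d by simp
next
  assume "lam < lstar"
  then obtain mu where "pos mu" "lam < mu" unfolding lstar_def using less_cSup_iff[OF S_ne S_bdd[OF assms]] by auto
  then show "pos lam" using pos_down by blast
qed

lemma lstar_g: assumes nb: "\<not> pos b" shows "g lstar < 0"
proof -
  have np: "\<not> pos lstar" using S_char[OF nb] by simp
  have nn: "Y lstar x \<ge> 0" if x: "x \<in> I" for x
  proof (rule ccontr)
    assume "\<not> Y lstar x \<ge> 0"
    then have e: "- Y lstar x > 0" by simp
    obtain \<delta> where d: "\<delta> > 0" "\<forall>mu. \<bar>mu - lstar\<bar> < \<delta> \<longrightarrow> (\<forall>t\<in>I. \<bar>Y mu t - Y lstar t\<bar> < - Y lstar x \<and> \<bar>Y1 mu t - Y1 lstar t\<bar> < - Y lstar x)"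
      using Y_cont[OF e, of lstar] by blast
    have "\<bar>(lstar - \<delta> / 2) - lstar\<bar> < \<delta>" using d(1) by simp
    then have "\<bar>Y (lstar - \<delta> / 2) x - Y lstar x\<bar> < - Y lstar x" using x d(2) by blast
    moreover have "pos (lstar - \<delta> / 2)" using S_char[OF nb] d by simp
    then have "Y (lstar - \<delta> / 2) x > 0" using x by (simp add: pos_def)
    ultimately show False by linarith
  qed
  obtain x where x: "x \<in> I" "Y lstar x \<le> 0" using np unfolding pos_def by (meson not_less)
  then have yx: "Y lstar x = 0" using nn by (simp add: order_antisym)
  have xhi: "x = hi"
  proof (rule ccontr)
    assume "x \<noteq> hi"
    then have "x < hi" using x by (simp add: I_iff)
    moreover have "lo < x" using x yx Y_lo by (metis I_iff order_le_less zero_neq_one)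
    ultimately have "Y1 lstar x = 0"
      using locmin[OF Y_deriv lo_I hi_I, of x] nn yx by (auto simp: I_iff)
    then show False using Y_nz[OF x(1) yx] by simp
  qed
  have "Y1 lstar hi \<le> 0"
  proof (rule ccontr)
    assume "\<not> Y1 lstar hi \<le> 0"
    then obtain w where w: "lo < w" "w < hi" "Y lstar w < Y lstar hi" using dl_pos[OF Y_deriv _ hi_I lo_I lo_hi] by force
    then show False using nn[of w] yx xhi by (simp add: I_iff)
  qed
  moreover have "Y1 lstar hi \<noteq> 0" using Y_nz[OF hi_I] yx xhi by auto
  ultimately show ?thesis using yx xhi by (simp add: g_def)
qed

lemma lstar_eig: assumes nb: "\<not> pos b" shows "\<exists>mu. mu < lstar \<and> g mu = 0"
proof -
  obtain l0 where l0: "pos l0" "g l0 > 0" using neg_exists by blast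
  have "l0 < lstar" using l0 S_char[OF nb] by simp
  then obtain mu where mu: "l0 \<le> mu" "mu \<le> lstar" "g mu = 0"
    using IVT2[of g lstar 0 l0] lstar_g[OF nb] l0 g_cont by force
  then have "mu \<noteq> lstar" using lstar_g[OF nb] by auto
  then have "mu < lstar" using mu by simp
  then show ?thesis using mu by blast
qed

definition "Pn lam \<longleftrightarrow> (\<exists>x1 x2 x3. x1 \<in> I \<and> x3 \<in> I \<and> x1 < x2 \<and> x2 < x3 \<and>
   Y lam x1 > 0 \<and> Y lam x2 < 0 \<and> Y lam x3 > 0)"

lemma Pn_notpos: assumes "Pn lam" shows "\<not> pos lam"
proof -
  obtain x1 x2 x3 where x: "x1 \<in> I" "x3 \<in> I" "x1 < x2" "x2 < x3" "Y lam x2 < 0"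
    using assms unfolding Pn_def by blast
  have "x2 \<in> I" using x by (auto simp: I_iff)
  then show ?thesis using x unfolding pos_def by force
qed

lemma Pn_open:
  assumes "Pn lam"
  shows "\<exists>\<delta>>0. \<forall>mu. \<bar>mu - lam\<bar> < \<delta> \<longrightarrow> Pn mu"
proof -
  obtain x1 x2 x3 where x: "x1 \<in> I" "x3 \<in> I" "x1 < x2" "x2 < x3" "Y lam x1 > 0" "Y lam x2 < 0" "Y lam x3 > 0"
    using assms unfolding Pn_def by blast
  have x2: "x2 \<in> I" using x by (auto simp: I_iff)
  define e where "e = min (Y lam x1) (min (- Y lam x2) (Y lam x3))"
  have e: "e > 0" using x by (simp add: e_def)
  obtain \<delta> where d: "\<delta> > 0" "\<forall>mu. \<bar>mu - lam\<bar> < \<delta> \<longrightarrow> (\<forall>x\<in>I. \<bar>Y mu x - Y lam x\<bar> < e \<and> \<bar>Y1 mu x - Y1 lam x\<bar> < e)"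
    using Y_cont[OF e] by blast
  show ?thesis
  proof (intro exI[of _ \<delta>] conjI[OF d(1)] allI impI)
    fix mu assume "\<bar>mu - lam\<bar> < \<delta>"
    then have h: "\<forall>x\<in>I. \<bar>Y mu x - Y lam x\<bar> < e" using d by blast
    have "\<bar>Y mu x1 - Y lam x1\<bar> < e" "\<bar>Y mu x2 - Y lam x2\<bar> < e" "\<bar>Y mu x3 - Y lam x3\<bar> < e"
      using h x x2 by auto
    moreover have "e \<le> Y lam x1" "e \<le> - Y lam x2" "e \<le> Y lam x3" by (auto simp: e_def)
    ultimately have "Y mu x1 > 0" "Y mu x2 < 0" "Y mu x3 > 0" by linarith+
    then show "Pn mu" unfolding Pn_def using x by blast
  qed
qed

lemma shape:
  assumes np: "\<not> pos lam" and nP: "\<not> Pn lam"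
  shows "\<exists>z. lo < z \<and> z \<le> hi \<and> Y lam z = 0 \<and> Y1 lam z < 0 \<and> (\<forall>x. lo \<le> x \<and> x < z \<longrightarrow> Y lam x > 0)
     \<and> (\<forall>x. z < x \<and> x < hi \<longrightarrow> Y lam x < 0) \<and> (\<forall>x. z < x \<and> x \<le> hi \<longrightarrow> Y lam x \<le> 0)"
proof -
  have "\<exists>x\<in>I. Y lam x \<le> 0" using np unfolding pos_def by (meson not_less)
  then obtain z where zI: "z \<in> I" and lz: "lo < z" and yz: "Y lam z = 0" and bel: "\<forall>x. lo \<le> x \<and> x < z \<longrightarrow> Y lam x > 0"
    using first_zero[OF Y_cont_x(1)] Y_lo by force
  have "Y1 lam z \<le> 0"
  proof (rule ccontr)
    assume "\<not> Y1 lam z \<le> 0"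
    then obtain x where x: "lo < x" "x < z" "Y lam x < Y lam z" using dl_pos[OF Y_deriv _ zI lo_I lz] by force
    have "Y lam x > 0" using bel x by auto
    then show False using x yz by simp
  qed
  moreover have "Y1 lam z \<noteq> 0" using Y_nz[OF zI yz] by auto
  ultimately have y1z: "Y1 lam z < 0" by simp
  have le: "Y lam x \<le> 0" if x: "z < x" "x \<le> hi" for x
  proof (rule ccontr)
    assume "\<not> Y lam x \<le> 0"
    then have yx: "Y lam x > 0" by simp
    have xI: "x \<in> I" using x zI by (auto simp: I_iff)
    obtain x2 where x2: "z < x2" "x2 < x" "Y lam x2 < Y lam z" using dr_neg[OF Y_deriv y1z zI xI x(1)] by blast
    have "Pn lam" unfolding Pn_def
      by (rule exI[of _ lo], rule exI[of _ x2], rule exI[of _ x]) (use lo_I xI x2 lz yx yz Y_lo in auto)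
    then show False using nP by simp
  qed
  have lt: "Y lam x < 0" if x: "z < x" "x < hi" for x
  proof (rule ccontr)
    assume "\<not> Y lam x < 0"
    then have yx: "Y lam x = 0" using le[of x] x by linarith
    have xI: "x \<in> I" using x zI by (auto simp: I_iff)
    have "Y1 lam x = 0"
      by (rule locmax[OF Y_deriv zI hi_I x]) (use le yx in auto)
    then show False using Y_nz[OF xI yx] by simp
  qed
  show ?thesis using lz zI yz y1z bel lt le by (auto simp: I_iff)
qed

definition "Cond lam p s \<longleftrightarrow> lo \<le> p \<and> p \<le> s \<and> s \<le> hi \<and> (\<forall>x. lo \<le> x \<and> x \<le> p \<longrightarrow> Y lam x > 0)
   \<and> (\<forall>x. p \<le> x \<and> x \<le> s \<longrightarrow> Y1 lam x < 0) \<and> (\<forall>x. s < x \<and> x \<le> hi \<longrightarrow> Y lam x < 0)"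

lemma Cond_notP: assumes "Cond lam p s" shows "\<not> Pn lam"
proof
  assume "Pn lam"
  then obtain x1 x2 x3 where x: "x1 \<in> I" "x3 \<in> I" "x1 < x2" "x2 < x3" "Y lam x1 > 0" "Y lam x2 < 0" "Y lam x3 > 0"
    unfolding Pn_def by blast
  have c: "lo \<le> p" "p \<le> s" "s \<le> hi" "\<forall>x. lo \<le> x \<and> x \<le> p \<longrightarrow> Y lam x > 0"
    "\<forall>x. p \<le> x \<and> x \<le> s \<longrightarrow> Y1 lam x < 0" "\<forall>x. s < x \<and> x \<le> hi \<longrightarrow> Y lam x < 0"
    using assms unfolding Cond_def by blast+
  have x2I: "x2 \<in> I" using x by (auto simp: I_iff)
  have "p < x2"
  proof (rule ccontr)
    assume "\<not> p < x2"
    then have "Y lam x2 > 0" using c(4) x x2I by (auto simp: I_iff)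
    then show False using x by simp
  qed
  have "x3 \<le> s"
  proof (rule ccontr)
    assume "\<not> x3 \<le> s"
    then have "Y lam x3 < 0" using c(6) x by (auto simp: I_iff)
    then show False using x by simp
  qed
  have "(\<lambda>x. - Y lam x) x2 < (\<lambda>x. - Y lam x) x3"
  proof (rule incr_less[where f="\<lambda>x. - Y lam x" and f'="\<lambda>x. - Y1 lam x"])
    show "\<forall>x\<in>I. ((\<lambda>x. - Y lam x) has_real_derivative - Y1 lam x) (at x within I)"
      using Y_deriv by (auto intro: DERIV_minus)
    fix t assume "x2 < t" "t < x3"
    then have "Y1 lam t < 0" using c(5) \<open>p < x2\<close> \<open>x3 \<le> s\<close> by auto
    then show "- Y1 lam t > 0" by simp
  qed (use x2I x in auto)
  then show False using x by simp
qed

end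


context rob begin

lemma Y_cont_sub: "{u..v} \<subseteq> I \<Longrightarrow> continuous_on {u..v} (Y lam)" "{u..v} \<subseteq> I \<Longrightarrow> continuous_on {u..v} (Y1 lam)"
  using continuous_on_subset Y_cont_x by blast+

lemma Cond_robust:
  assumes ps: "lo \<le> p" "p \<le> s" "s \<le> hi"
    and A: "\<forall>x. lo \<le> x \<and> x \<le> p \<longrightarrow> Y l0 x > 0"
    and B: "\<forall>x. p \<le> x \<and> x \<le> s \<longrightarrow> Y1 l0 x < 0"
    and C: "s = hi \<or> (\<forall>x. s \<le> x \<and> x \<le> hi \<longrightarrow> Y l0 x < 0)"
  shows "\<exists>\<delta>>0. \<forall>mu. \<bar>mu - l0\<bar> < \<delta> \<longrightarrow> Cond mu p s"
proof -
  have s1: "{lo..p} \<subseteq> I" "{p..s} \<subseteq> I" "{s..hi} \<subseteq> I" using ps by (auto simp: I_iff)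
  obtain x1 where x1: "x1 \<in> {lo..p}" "\<forall>y\<in>{lo..p}. Y l0 x1 \<le> Y l0 y"
    using continuous_attains_inf[of "{lo..p}" "Y l0"] Y_cont_sub(1)[OF s1(1)] ps by auto
  obtain x2 where x2: "x2 \<in> {p..s}" "\<forall>y\<in>{p..s}. Y1 l0 y \<le> Y1 l0 x2"
    using continuous_attains_sup[of "{p..s}" "Y1 l0"] Y_cont_sub(2)[OF s1(2)] ps by auto
  have "\<exists>m3>0. s = hi \<or> (\<forall>x. s \<le> x \<and> x \<le> hi \<longrightarrow> Y l0 x \<le> - m3)"
  proof (cases "s = hi")
    case True then show ?thesis by (intro exI[of _ 1]) auto
  next
    case False
    then have C': "\<forall>x. s \<le> x \<and> x \<le> hi \<longrightarrow> Y l0 x < 0" using C by simp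
    obtain x3 where x3: "x3 \<in> {s..hi}" "\<forall>y\<in>{s..hi}. Y l0 y \<le> Y l0 x3"
      using continuous_attains_sup[of "{s..hi}" "Y l0"] Y_cont_sub(1)[OF s1(3)] ps by auto
    have "Y l0 x3 < 0" using C' x3 by auto
    then show ?thesis using x3 by (intro exI[of _ "- Y l0 x3"]) auto
  qed
  then obtain m3 where m3: "m3 > 0" "s = hi \<or> (\<forall>x. s \<le> x \<and> x \<le> hi \<longrightarrow> Y l0 x \<le> - m3)" by blast
  define e where "e = min (Y l0 x1) (min (- Y1 l0 x2) m3)"
  have e: "e > 0" unfolding e_def using A B x1 x2 m3 by auto
  obtain \<delta> where d: "\<delta> > 0" "\<forall>mu. \<bar>mu - l0\<bar> < \<delta> \<longrightarrow> (\<forall>t\<in>I. \<bar>Y mu t - Y l0 t\<bar> < e \<and> \<bar>Y1 mu t - Y1 l0 t\<bar> < e)"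
    using Y_cont[OF e, of l0] by blast
  show ?thesis
  proof (intro exI[of _ \<delta>] conjI[OF d(1)] allI impI)
    fix mu assume "\<bar>mu - l0\<bar> < \<delta>"
    then have h: "\<forall>t\<in>I. \<bar>Y mu t - Y l0 t\<bar> < e \<and> \<bar>Y1 mu t - Y1 l0 t\<bar> < e" using d by blast
    have c1: "Y mu x > 0" if "lo \<le> x" "x \<le> p" for x
    proof -
      have "x \<in> I" using that ps by (auto simp: I_iff)
      then have "\<bar>Y mu x - Y l0 x\<bar> < e" using h by blast
      moreover have "Y l0 x1 \<le> Y l0 x" using x1 that by auto
      moreover have "e \<le> Y l0 x1" by (simp add: e_def)
      ultimately show ?thesis by linarith
    qed
    have c2: "Y1 mu x < 0" if "p \<le> x" "x \<le> s" for x
    proof -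
      have "x \<in> I" using that ps by (auto simp: I_iff)
      then have "\<bar>Y1 mu x - Y1 l0 x\<bar> < e" using h by blast
      moreover have "Y1 l0 x \<le> Y1 l0 x2" using x2 that by auto
      moreover have "e \<le> - Y1 l0 x2" by (simp add: e_def)
      ultimately show ?thesis by linarith
    qed
    have c3: "Y mu x < 0" if "s < x" "x \<le> hi" for x
    proof -
      have "s \<noteq> hi" using that by simp
      then have "Y l0 x \<le> - m3" using m3 that by auto
      moreover have "x \<in> I" using that ps by (auto simp: I_iff)
      then have "\<bar>Y mu x - Y l0 x\<bar> < e" using h by blast
      moreover have "e \<le> m3" by (simp add: e_def)
      ultimately show ?thesis by linarith
    qed
    show "Cond mu p s" unfolding Cond_def using ps c1 c2 c3 by blast
  qed
qed

lemma eig_between: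
  assumes nb: "\<not> pos b" and P: "Pn lam" and g0: "g lam = 0"
  shows "\<exists>mu. lstar < mu \<and> mu < lam \<and> g mu = 0"
proof -
  define T where "T = Collect Pn"
  have Tne: "T \<noteq> {}" using P by (auto simp: T_def)
  have Tb: "lstar \<le> mu" if "mu \<in> T" for mu
    using that Pn_notpos S_char[OF nb] by (force simp: T_def)
  have bb: "bdd_below T" using Tb by (rule bdd_belowI)
  define l0 where "l0 = Inf T"
  have l0ge: "lstar \<le> l0" unfolding l0_def by (rule cInf_greatest[OF Tne Tb])
  have l0le: "l0 \<le> lam" unfolding l0_def by (rule cInf_lower) (use P bb in \<open>auto simp: T_def\<close>)
  have near: "\<exists>mu. Pn mu \<and> \<bar>mu - l0\<bar> < \<delta>" if dp: "\<delta> > 0" for \<delta>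
  proof -
    have "Inf T < l0 + \<delta>" using dp by (simp add: l0_def)
    then obtain mu where mu: "mu \<in> T" "mu < l0 + \<delta>" using cInf_less_iff[OF Tne bb] by blast
    have "l0 \<le> mu" unfolding l0_def by (rule cInf_lower[OF mu(1) bb])
    then show ?thesis using mu by (auto simp: T_def)
  qed
  have nP: "\<not> Pn l0"
  proof
    assume "Pn l0"
    then obtain \<delta> where d: "\<delta> > 0" "\<forall>mu. \<bar>mu - l0\<bar> < \<delta> \<longrightarrow> Pn mu" using Pn_open by blast
    then have "l0 - \<delta> / 2 \<in> T" by (simp add: T_def)
    then have "l0 \<le> l0 - \<delta> / 2" unfolding l0_def by (rule cInf_lower[OF _ bb])
    then show False using d by simp
  qed
  have np: "\<not> pos l0"
  proof
    assume "pos l0"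
    then obtain \<delta> where d: "\<delta> > 0" "\<forall>mu. \<bar>mu - l0\<bar> < \<delta> \<longrightarrow> pos mu" using pos_open by blast
    obtain mu where "Pn mu" "\<bar>mu - l0\<bar> < \<delta>" using near[OF d(1)] by blast
    then show False using d Pn_notpos by blast
  qed
  obtain z where z: "lo < z" "z \<le> hi" "Y l0 z = 0" "Y1 l0 z < 0" "\<forall>x. lo \<le> x \<and> x < z \<longrightarrow> Y l0 x > 0"
     "\<forall>x. z < x \<and> x < hi \<longrightarrow> Y l0 x < 0" "\<forall>x. z < x \<and> x \<le> hi \<longrightarrow> Y l0 x \<le> 0"
    using shape[OF np nP] by blast
  have zI: "z \<in> I" using z by (auto simp: I_iff)
  have key: "z < hi \<and> Y l0 hi = 0"
  proof (rule ccontr)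
    assume nk: "\<not> (z < hi \<and> Y l0 hi = 0)"
    have e: "- Y1 l0 z > 0" using z by simp
    obtain \<eta> where eta: "\<eta> > 0" "\<forall>x'\<in>I. dist x' z < \<eta> \<longrightarrow> dist (Y1 l0 x') (Y1 l0 z) < - Y1 l0 z"
      using Y_cont_x(2)[of l0] zI e unfolding continuous_on_iff by blast
    have neg: "Y1 l0 x' < 0" if "x' \<in> I" "\<bar>x' - z\<bar> < \<eta>" for x'
    proof -
      have "\<bar>Y1 l0 x' - Y1 l0 z\<bar> < - Y1 l0 z" using eta that by (auto simp: dist_real_def)
      then show ?thesis by linarith
    qed
    define p where "p = max lo (z - \<eta> / 2)"
    define s where "s = min hi (z + \<eta> / 2)"
    have ps: "lo \<le> p" "p \<le> s" "s \<le> hi" "p < z" "z \<le> s" using z eta by (auto simp: p_def s_def)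
    have A: "\<forall>x. lo \<le> x \<and> x \<le> p \<longrightarrow> Y l0 x > 0" using z ps by auto
    have B: "\<forall>x. p \<le> x \<and> x \<le> s \<longrightarrow> Y1 l0 x < 0"
    proof (intro allI impI)
      fix x assume x: "p \<le> x \<and> x \<le> s"
      then have "x \<in> I" using ps by (auto simp: I_iff)
      moreover have "\<bar>x - z\<bar> < \<eta>" using x eta by (auto simp: p_def s_def abs_less_iff)
      ultimately show "Y1 l0 x < 0" by (rule neg)
    qed
    have C: "s = hi \<or> (\<forall>x. s \<le> x \<and> x \<le> hi \<longrightarrow> Y l0 x < 0)"
    proof (cases "z = hi")
      case True then show ?thesis using ps by simp
    next
      case False
      then have zh: "z < hi" using z by simp
      then have "Y l0 hi \<noteq> 0" using nk by simp
      moreover have "Y l0 hi \<le> 0" using z zh by auto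
      ultimately have yh: "Y l0 hi < 0" by simp
      have "s > z" using zh eta by (simp add: s_def)
      then have "\<forall>x. s \<le> x \<and> x \<le> hi \<longrightarrow> Y l0 x < 0" using z yh by (metis less_le_trans order_le_less)
      then show ?thesis by simp
    qed
    obtain \<delta> where d: "\<delta> > 0" "\<forall>mu. \<bar>mu - l0\<bar> < \<delta> \<longrightarrow> Cond mu p s"
      using Cond_robust[OF ps(1-3) A B C] by blast
    obtain mu where "Pn mu" "\<bar>mu - l0\<bar> < \<delta>" using near[OF d(1)] by blast
    then show False using d Cond_notP by blast
  qed
  have "Y1 l0 hi \<ge> 0"
  proof (rule ccontr)
    assume "\<not> Y1 l0 hi \<ge> 0"
    then have "Y1 l0 hi < 0" by simp
    then obtain x where x: "z < x" "x < hi" "Y l0 x > Y l0 hi" using dl_neg[OF Y_deriv[of l0] _ hi_I zI] key by blast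
    have "Y l0 x < 0" using z(6) x by blast
    then show False using x key by simp
  qed
  moreover have "Y1 l0 hi \<noteq> 0" using Y_nz[OF hi_I] key by auto
  ultimately have gl0: "g l0 > 0" using key by (simp add: g_def)
  have gls: "g lstar < 0" by (rule lstar_g[OF nb])
  have "lstar \<noteq> l0" using gl0 gls by auto
  then have ll: "lstar < l0" using l0ge by simp
  have "l0 \<noteq> lam" using gl0 g0 by auto
  then have l0l: "l0 < lam" using l0le by simp
  obtain mu where mu: "lstar \<le> mu" "mu \<le> l0" "g mu = 0"
    using IVT[of g lstar 0 l0] gls gl0 ll g_cont by force
  have "mu \<noteq> lstar" "mu \<noteq> l0" using mu gls gl0 by auto
  then show ?thesis using mu l0l by (intro exI[of _ mu]) auto
qed

end


context rob begin

lemma int_zero: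
  fixes f :: "real \<Rightarrow> real"
  assumes c: "continuous_on I f" and nn: "\<forall>x\<in>I. f x \<ge> 0" and i: "integral I f = 0" and x: "x \<in> I"
  shows "f x = 0"
proof -
  have cb: "cbox lo hi = I" by (simp add: I_def)
  have int: "f integrable_on I" unfolding I_def by (rule integrable_continuous_interval) (use c in \<open>simp add: I_def\<close>)
  then have "(f has_integral 0) I" using i by (metis integrable_integral)
  then have hi: "(f has_integral 0) (cbox lo hi)" using cb by simp
  show ?thesis
  proof (rule has_integral_0_cbox_imp_0[of lo hi f x])
    show "continuous_on (cbox lo hi) f" using c cb by simp
    show "\<And>y. y \<in> box lo hi \<Longrightarrow> 0 \<le> f y" using nn by (auto simp: I_iff)
    show "(f has_integral 0) (cbox lo hi)" by (rule hi)
    show "box lo hi \<noteq> {}" using lo_hi by simp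
    show "x \<in> cbox lo hi" using x cb by simp
  qed
qed

lemma final_arg:
  assumes lt: "lam1 < lam2" and p1: "pos lam1" and g1: "g lam1 = 0" and g2: "g lam2 = 0"
    and z: "lo < z" "z < hi" "Y lam2 z = 0" "\<forall>x. lo \<le> x \<and> x < z \<longrightarrow> Y lam2 x > 0"
      "\<forall>x. z < x \<and> x \<le> hi \<longrightarrow> Y lam2 x < 0"
    and c1: "c1 \<noteq> 0" and c2: "c2 \<noteq> 0"
    and U1: "\<forall>x\<in>I. u1 x = c1 * Y lam1 x" and U2: "\<forall>x\<in>I. u2 x = c2 * Y lam2 x"
    and n1: "integral I (\<lambda>x. (u1 x)\<^sup>2) = 1" and n2: "integral I (\<lambda>x. (u2 x)\<^sup>2) = 1"
    and hyp: "integral I (\<lambda>x. x * ((u2 x)\<^sup>2 - (u1 x)\<^sup>2)) = 0"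
  shows "(u2 lo)\<^sup>2 > (u1 lo)\<^sup>2 \<and> (u2 hi)\<^sup>2 > (u1 hi)\<^sup>2"
proof -
  have zI: "z \<in> I" using z by (auto simp: I_iff)
  have v1p: "Y lam1 x > 0" if "x \<in> I" for x using p1 that by (simp add: pos_def)
  define W where "W x = Y lam1 x * Y1 lam2 x - Y1 lam1 x * Y lam2 x" for x
  have Wd: "\<forall>x\<in>I. (W has_real_derivative (lam1 - lam2) * Y lam1 x * Y lam2 x) (at x within I)"
    unfolding W_def[abs_def] using wronsk[OF Y_sol Y_sol] by blast
  have mWd: "\<forall>x\<in>I. ((\<lambda>x. - W x) has_real_derivative - ((lam1 - lam2) * Y lam1 x * Y lam2 x)) (at x within I)"
    using Wd by (auto intro: DERIV_minus)
  have W0: "W lo = 0" by (simp add: W_def Y_lo Y1_lo)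
  have Wh: "W hi = 0"
  proof -
    have "Y1 lam1 hi = - be * Y lam1 hi" "Y1 lam2 hi = - be * Y lam2 hi" using g1 g2 by (simp_all add: g_def eq_neg_iff_add_eq_0)
    then show ?thesis by (simp add: W_def)
  qed
  have Wneg: "W x < 0" if x: "lo < x" "x < hi" for x
  proof (cases "x \<le> z")
    case True
    have xI: "x \<in> I" using x by (simp add: I_iff)
    have "(\<lambda>x. - W x) lo < (\<lambda>x. - W x) x"
    proof (rule incr_less[OF mWd lo_I xI x(1)])
      fix t assume t: "lo < t" "t < x"
      then have "t \<in> I" using x by (simp add: I_iff)
      then have "Y lam1 t > 0" by (rule v1p)
      moreover have "Y lam2 t > 0" using z t True by auto
      ultimately show "- ((lam1 - lam2) * Y lam1 t * Y lam2 t) > 0" using lt by (simp add: mult_neg_pos)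
    qed
    then show ?thesis using W0 by simp
  next
    case False
    have xI: "x \<in> I" using x by (simp add: I_iff)
    have "W x < W hi"
    proof (rule incr_less[OF Wd xI hi_I x(2)])
      fix t assume t: "x < t" "t < hi"
      then have "t \<in> I" using x by (simp add: I_iff)
      then have "Y lam1 t > 0" by (rule v1p)
      moreover have "Y lam2 t < 0" using z t False by auto
      ultimately show "(lam1 - lam2) * Y lam1 t * Y lam2 t > 0" using lt by (simp add: mult_neg_neg mult_neg_pos)
    qed
    then show ?thesis using Wh by simp
  qed
  define \<rho> where "\<rho> x = Y lam2 x / Y lam1 x" for x
  have \<rho>d: "\<forall>x\<in>I. ((\<lambda>x. - \<rho> x) has_real_derivative - (W x / (Y lam1 x * Y lam1 x))) (at x within I)"
  proof
    fix x assume x: "x \<in> I"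
    have "(\<rho> has_real_derivative (Y1 lam2 x * Y lam1 x - Y lam2 x * Y1 lam1 x) / (Y lam1 x * Y lam1 x)) (at x within I)"
      unfolding \<rho>_def[abs_def] by (rule DERIV_divide[OF Y_deriv Y_deriv]) (use v1p[OF x] in simp)
    moreover have "Y1 lam2 x * Y lam1 x - Y lam2 x * Y1 lam1 x = W x" by (simp add: W_def algebra_simps)
    ultimately show "((\<lambda>x. - \<rho> x) has_real_derivative - (W x / (Y lam1 x * Y lam1 x))) (at x within I)"
      by (auto intro: DERIV_minus)
  qed
  have \<rho>dec: "\<rho> t < \<rho> s" if st: "s \<in> I" "t \<in> I" "s < t" for s t
  proof -
    have "(\<lambda>x. - \<rho> x) s < (\<lambda>x. - \<rho> x) t"
    proof (rule incr_less[OF \<rho>d st])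
      fix x assume x: "s < x" "x < t"
      then have "lo < x" "x < hi" using st by (auto simp: I_iff)
      then have "W x < 0" "Y lam1 x > 0" using Wneg v1p by (auto simp: I_iff)
      then show "- (W x / (Y lam1 x * Y lam1 x)) > 0" by (simp add: divide_neg_pos)
    qed
    then show ?thesis by simp
  qed
  have \<rho>c: "continuous_on I \<rho>"
  proof -
    have "continuous_on I (\<lambda>x. - \<rho> x)" by (rule DERIV_continuous_on) (use \<rho>d in blast)
    from continuous_on_minus[OF this] show ?thesis by simp
  qed
  have \<rho>z: "\<rho> z = 0" using z by (simp add: \<rho>_def)
  have \<rho>pos: "\<rho> x \<ge> 0" if "lo \<le> x" "x \<le> z" for x
  proof (cases "x = z")
    case True then show ?thesis using \<rho>z by simp
  next
    case False
    then have "Y lam2 x > 0" using z that by auto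
    moreover have "Y lam1 x > 0" using v1p that z by (auto simp: I_iff)
    ultimately show ?thesis by (simp add: \<rho>_def)
  qed
  have \<rho>neg: "\<rho> x \<le> 0" if "z \<le> x" "x \<le> hi" for x
  proof (cases "x = z")
    case True then show ?thesis using \<rho>z by simp
  next
    case False
    then have "Y lam2 x < 0" using z that by auto
    moreover have "Y lam1 x > 0" using v1p that z by (auto simp: I_iff)
    ultimately show ?thesis by (simp add: \<rho>_def divide_neg_pos less_imp_le)
  qed
  define k where "k = (c2 / c1)\<^sup>2"
  have k: "k > 0" using c1 c2 by (simp add: k_def)
  define \<phi> where "\<phi> x = k * (\<rho> x)\<^sup>2 - 1" for x
  have \<phi>c: "continuous_on I \<phi>" unfolding \<phi>_def[abs_def] by (intro continuous_intros \<rho>c)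
  have \<phi>z: "\<phi> z = -1" by (simp add: \<phi>_def \<rho>z)
  have F1: "\<phi> y < \<phi> x" if "lo \<le> x" "x < y" "y \<le> z" for x y
  proof -
    have xI: "x \<in> I" "y \<in> I" using that z by (auto simp: I_iff)
    have "\<rho> y < \<rho> x" by (rule \<rho>dec[OF xI that(2)])
    moreover have "\<rho> y \<ge> 0" using \<rho>pos that by simp
    ultimately have "(\<rho> y)\<^sup>2 < (\<rho> x)\<^sup>2" by (simp add: power_strict_mono)
    then show ?thesis using k by (simp add: \<phi>_def)
  qed
  have F2: "\<phi> x < \<phi> y" if "z \<le> x" "x < y" "y \<le> hi" for x y
  proof -
    have xI: "x \<in> I" "y \<in> I" using that z by (auto simp: I_iff)
    have "\<rho> y < \<rho> x" by (rule \<rho>dec[OF xI that(2)])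
    moreover have "\<rho> x \<le> 0" using \<rho>neg that by simp
    ultimately have "(- \<rho> x)\<^sup>2 < (- \<rho> y)\<^sup>2" by (intro power_strict_mono) auto
    then have "(\<rho> x)\<^sup>2 < (\<rho> y)\<^sup>2" by simp
    then show ?thesis using k by (simp add: \<phi>_def)
  qed
  define Df where "Df x = (u2 x)\<^sup>2 - (u1 x)\<^sup>2" for x
  have Dfe: "Df x = (c1 * Y lam1 x)\<^sup>2 * \<phi> x" if x: "x \<in> I" for x
  proof -
    have v: "Y lam1 x \<noteq> 0" using v1p[OF x] by simp
    have "Y lam2 x = \<rho> x * Y lam1 x" using v by (simp add: \<rho>_def)
    then have "Df x = (c2 * (\<rho> x * Y lam1 x))\<^sup>2 - (c1 * Y lam1 x)\<^sup>2" using U1 U2 x by (simp add: Df_def)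
    also have "\<dots> = (c1 * Y lam1 x)\<^sup>2 * \<phi> x" using c1 by (simp add: \<phi>_def k_def power_mult_distrib power_divide field_simps)
    finally show ?thesis .
  qed
  have wpos: "(c1 * Y lam1 x)\<^sup>2 > 0" if "x \<in> I" for x using c1 v1p[OF that] by simp
  have sg1: "Df x \<le> 0" if "x \<in> I" "\<phi> x \<le> 0" for x using Dfe[OF that(1)] wpos[OF that(1)] that(2) by (simp add: mult_nonneg_nonpos less_imp_le)
  have sg2: "Df x \<ge> 0" if "x \<in> I" "\<phi> x \<ge> 0" for x using Dfe[OF that(1)] wpos[OF that(1)] that(2) by simp
  have Dfz: "Df z < 0" using Dfe[OF zI] wpos[OF zI] \<phi>z by simp
  have u1c: "continuous_on I u1"
    by (rule continuous_on_eq[of _ "\<lambda>x. c1 * Y lam1 x"]) (use U1 Y_cont_x in \<open>auto intro!: continuous_intros\<close>)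
  have u2c: "continuous_on I u2"
    by (rule continuous_on_eq[of _ "\<lambda>x. c2 * Y lam2 x"]) (use U2 Y_cont_x in \<open>auto intro!: continuous_intros\<close>)
  have Dfc: "continuous_on I Df" unfolding Df_def[abs_def] by (intro continuous_intros u1c u2c)
  have integ: "f integrable_on I" if "continuous_on I f" for f :: "real \<Rightarrow> real"
    unfolding I_def by (rule integrable_continuous_interval) (use that in \<open>simp add: I_def\<close>)
  have iDf: "integral I Df = 0"
  proof -
    have "integral I Df = integral I (\<lambda>x. (u2 x)\<^sup>2) - integral I (\<lambda>x. (u1 x)\<^sup>2)"
      unfolding Df_def by (rule integral_diff; rule integ; intro continuous_intros u1c u2c)
    then show ?thesis using n1 n2 by simp
  qed
  have ixDf: "integral I (\<lambda>x. x * Df x) = 0" using hyp by (simp add: Df_def)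
  have iG: "integral I (\<lambda>x. (x - x0) * Df x) = 0" for x0
  proof -
    have e: "(\<lambda>x. (x - x0) * Df x) = (\<lambda>x. x * Df x - x0 * Df x)" by (auto simp: algebra_simps)
    have "integral I (\<lambda>x. x * Df x - x0 * Df x) = integral I (\<lambda>x. x * Df x) - integral I (\<lambda>x. x0 * Df x)"
      by (rule integral_diff; rule integ; intro continuous_intros Dfc)
    then show ?thesis unfolding e using ixDf iDf by simp
  qed
  have Gc: "continuous_on I (\<lambda>x. (x - x0) * Df x)" for x0 by (intro continuous_intros Dfc)
  have both_neg: False if a1: "\<phi> lo \<le> 0" and a2: "\<phi> hi \<le> 0"
  proof -
    have "\<phi> x \<le> 0" if x: "x \<in> I" for x
    proof (cases "x \<le> z")
      case True
      show ?thesis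
      proof (cases "x = lo")
        case True then show ?thesis using a1 by simp
      next
        case False then have "lo < x" using x by (simp add: I_iff)
        then show ?thesis using F1[of lo x] True a1 by simp
      qed
    next
      case False
      show ?thesis
      proof (cases "x = hi")
        case True then show ?thesis using a2 by simp
      next
        case F: False then have "x < hi" using x by (simp add: I_iff)
        then show ?thesis using F2[of x hi] False a2 by simp
      qed
    qed
    then have "\<forall>x\<in>I. - Df x \<ge> 0" using sg1 by (simp add: le_minus_iff)
    moreover have "continuous_on I (\<lambda>x. - Df x)" by (intro continuous_intros Dfc)
    moreover have "integral I (\<lambda>x. - Df x) = 0" using iDf by simp
    ultimately have "- Df z = 0" using int_zero zI by blast
    then show False using Dfz by simp
  qed
  have plo: "\<phi> lo > 0"
  proof (rule ccontr)
    assume "\<not> \<phi> lo > 0"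
    then have a1: "\<phi> lo \<le> 0" by simp
    then have a2: "\<phi> hi > 0" using both_neg by force
    have "continuous_on {z..hi} \<phi>" by (rule continuous_on_subset[OF \<phi>c]) (use zI in \<open>auto simp: I_iff\<close>)
    then obtain x0 where x0: "z \<le> x0" "x0 \<le> hi" "\<phi> x0 = 0"
      using IVT'[of \<phi> z 0 hi] \<phi>z a2 z by force
    have zx0: "z < x0" using x0 \<phi>z by (metis order_le_less zero_neq_neg_one)
    have G: "\<forall>x\<in>I. (x - x0) * Df x \<ge> 0"
    proof
      fix x assume x: "x \<in> I"
      show "(x - x0) * Df x \<ge> 0"
      proof (cases "x < x0")
        case True
        have "\<phi> x \<le> 0"
        proof (cases "x \<le> z")
          case True
          show ?thesis
          proof (cases "x = lo")
            case True then show ?thesis using a1 by simp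
          next
            case False then have "lo < x" using x by (simp add: I_iff)
            then show ?thesis using F1[of lo x] \<open>x \<le> z\<close> a1 by simp
          qed
        next
          case False
          then show ?thesis using F2[of x x0] \<open>x < x0\<close> x0 by simp
        qed
        then have "Df x \<le> 0" using sg1 x by simp
        then show ?thesis using True by (simp add: mult_nonpos_nonpos)
      next
        case False
        have "\<phi> x \<ge> 0"
        proof (cases "x = x0")
          case True then show ?thesis using x0 by simp
        next
          case F: False
          then have "x0 < x" using False by simp
          then show ?thesis using F2[of x0 x] x0 zx0 x by (simp add: I_iff)
        qed
        then have "Df x \<ge> 0" using sg2 x by simp
        then show ?thesis using False by simp
      qed
    qed
    have "(z - x0) * Df z = 0" by (rule int_zero[OF Gc G iG zI])
    then show False using zx0 Dfz by simp
  qed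
  have phi: "\<phi> hi > 0"
  proof (rule ccontr)
    assume "\<not> \<phi> hi > 0"
    then have a2: "\<phi> hi \<le> 0" by simp
    have a1: "\<phi> lo > 0" by (rule plo)
    have "continuous_on {lo..z} \<phi>" by (rule continuous_on_subset[OF \<phi>c]) (use zI in \<open>auto simp: I_iff\<close>)
    then obtain x0 where x0: "lo \<le> x0" "x0 \<le> z" "\<phi> x0 = 0"
      using IVT2'[of \<phi> z 0 lo] \<phi>z a1 z by force
    have zx0: "x0 < z" using x0 \<phi>z by (metis order_le_less zero_neq_neg_one)
    have G: "\<forall>x\<in>I. - ((x - x0) * Df x) \<ge> 0"
    proof
      fix x assume x: "x \<in> I"
      show "- ((x - x0) * Df x) \<ge> 0"
      proof (cases "x \<le> x0")
        case True
        have "\<phi> x \<ge> 0"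
        proof (cases "x = x0")
          case True then show ?thesis using x0 by simp
        next
          case False
          then have "x < x0" using True by simp
          then show ?thesis using F1[of x x0] x0 x by (simp add: I_iff)
        qed
        then have "Df x \<ge> 0" using sg2 x by simp
        then show ?thesis using True by (simp add: mult_nonpos_nonneg)
      next
        case False
        have "\<phi> x \<le> 0"
        proof (cases "x \<le> z")
          case True
          then show ?thesis using F1[of x0 x] False x0 by simp
        next
          case F: False
          show ?thesis
          proof (cases "x = hi")
            case True then show ?thesis using a2 by simp
          next
            case False then have "x < hi" using x by (simp add: I_iff)
            then show ?thesis using F2[of x hi] F a2 by simp
          qed
        qed
        then have "Df x \<le> 0" using sg1 x by simp
        then show ?thesis using False by (simp add: mult_nonneg_nonpos)
      qed
    qed
    have Gc': "continuous_on I (\<lambda>x. - ((x - x0) * Df x))" by (intro continuous_intros Dfc)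
    have iG': "integral I (\<lambda>x. - ((x - x0) * Df x)) = 0" using iG by simp
    have "- ((z - x0) * Df z) = 0" by (rule int_zero[OF Gc' G iG' zI])
    then show False using zx0 Dfz by simp
  qed
  have "Df lo > 0" using Dfe[OF lo_I] wpos[OF lo_I] plo by simp
  moreover have "Df hi > 0" using Dfe[OF hi_I] wpos[OF hi_I] phi by simp
  ultimately show ?thesis by (simp add: Df_def)
qed

end


context rob begin

lemma main_loc:
  assumes f1: "first_eigenfunction L a al be u1" and nu1: "L2_normalized L u1"
    and s2: "second_eigenfunction L a al be u2" and nu2: "L2_normalized L u2"
    and hyp: "integral {-L/2..L/2} (\<lambda>x. x * ((u2 x)\<^sup>2 - (u1 x)\<^sup>2)) = 0"
  shows "(u2 (-L/2))\<^sup>2 > (u1 (-L/2))\<^sup>2 \<and> (u2 (L/2))\<^sup>2 > (u1 (L/2))\<^sup>2"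
proof -
  obtain lam1 where ep1: "robin_eigenpair L a al be lam1 u1"
    and m1: "\<forall>\<mu>. robin_eigenvalue L a al be \<mu> \<longrightarrow> lam1 \<le> \<mu>"
    using f1 unfolding first_eigenfunction_def by blast
  obtain lam2 where ep2: "robin_eigenpair L a al be lam2 u2"
    and ex2: "\<exists>\<mu>. robin_eigenvalue L a al be \<mu> \<and> \<mu> < lam2"
    and un2: "\<forall>\<mu> \<nu>. robin_eigenvalue L a al be \<mu> \<and> \<mu> < lam2 \<and> robin_eigenvalue L a al be \<nu> \<and> \<nu> < lam2 \<longrightarrow> \<mu> = \<nu>"
    using s2 unfolding second_eigenfunction_def by blast
  have e1: "u1 lo \<noteq> 0" "\<forall>x\<in>I. u1 x = u1 lo * Y lam1 x" "g lam1 = 0" using eig_Y[OF ep1] by auto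
  have e2: "u2 lo \<noteq> 0" "\<forall>x\<in>I. u2 x = u2 lo * Y lam2 x" "g lam2 = 0" using eig_Y[OF ep2] by auto
  have ev1: "robin_eigenvalue L a al be lam1" using ep1 unfolding robin_eigenvalue_def by blast
  have p1: "pos lam1"
  proof (rule ccontr)
    assume np: "\<not> pos lam1"
    obtain mu where mu: "mu < lstar" "g mu = 0" using lstar_eig[OF np] by blast
    have "lam1 \<le> mu" using m1 Y_eig[OF mu(2)] by blast
    moreover have "pos mu" using S_char[OF np] mu by simp
    ultimately have "pos lam1" using pos_down by (metis order_le_less)
    then show False using np by simp
  qed
  have lt: "lam1 < lam2" using ex2 m1 by force
  have np2: "\<not> pos lam2"
  proof
    assume p2: "pos lam2"
    define W where "W x = Y lam1 x * Y1 lam2 x - Y1 lam1 x * Y lam2 x" for x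
    have Wd: "\<forall>x\<in>I. (W has_real_derivative (lam1 - lam2) * Y lam1 x * Y lam2 x) (at x within I)"
      unfolding W_def[abs_def] using wronsk[OF Y_sol Y_sol] by blast
    have mWd: "\<forall>x\<in>I. ((\<lambda>x. - W x) has_real_derivative - ((lam1 - lam2) * Y lam1 x * Y lam2 x)) (at x within I)"
      using Wd by (auto intro: DERIV_minus)
    have W0: "W lo = 0" by (simp add: W_def Y_lo Y1_lo)
    have Wh: "W hi = 0"
    proof -
      have "Y1 lam1 hi = - be * Y lam1 hi" "Y1 lam2 hi = - be * Y lam2 hi" using e1 e2 by (simp_all add: g_def eq_neg_iff_add_eq_0)
      then show ?thesis by (simp add: W_def)
    qed
    have "(\<lambda>x. - W x) lo < (\<lambda>x. - W x) hi"
    proof (rule incr_less[OF mWd lo_I hi_I lo_hi])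
      fix t assume t: "lo < t" "t < hi"
      then have "t \<in> I" by (simp add: I_iff)
      then have "Y lam1 t > 0" "Y lam2 t > 0" using p1 p2 by (auto simp: pos_def)
      then show "- ((lam1 - lam2) * Y lam1 t * Y lam2 t) > 0" using lt by (simp add: mult_neg_pos)
    qed
    then show False using W0 Wh by simp
  qed
  have nP2: "\<not> Pn lam2"
  proof
    assume P: "Pn lam2"
    obtain mu where mu: "lstar < mu" "mu < lam2" "g mu = 0" using eig_between[OF np2 P e2(3)] by blast
    have "lam1 < lstar" using S_char[OF np2] p1 by simp
    moreover have "lam1 = mu" using un2 ev1 lt Y_eig[OF mu(3)] mu(2) by blast
    ultimately show False using mu by simp
  qed
  obtain z where z: "lo < z" "z \<le> hi" "Y lam2 z = 0" "Y1 lam2 z < 0" "\<forall>x. lo \<le> x \<and> x < z \<longrightarrow> Y lam2 x > 0"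
     "\<forall>x. z < x \<and> x < hi \<longrightarrow> Y lam2 x < 0" "\<forall>x. z < x \<and> x \<le> hi \<longrightarrow> Y lam2 x \<le> 0"
    using shape[OF np2 nP2] by blast
  have gh: "Y1 lam2 hi = - be * Y lam2 hi" using e2 by (simp add: g_def eq_neg_iff_add_eq_0)
  have zh: "z < hi"
  proof (rule ccontr)
    assume "\<not> z < hi"
    then have "z = hi" using z by simp
    then show False using z gh by simp
  qed
  have yh: "Y lam2 hi < 0"
  proof -
    have "Y lam2 hi \<le> 0" using z zh by simp
    moreover have "Y lam2 hi \<noteq> 0" using Y_nz[OF hi_I] gh by auto
    ultimately show ?thesis by simp
  qed
  have z5: "\<forall>x. z < x \<and> x \<le> hi \<longrightarrow> Y lam2 x < 0"
    using z(6) yh by (metis order_le_less)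
  have n1: "integral I (\<lambda>x. (u1 x)\<^sup>2) = 1" using nu1 unfolding L2_normalized_def I_eq by simp
  have n2: "integral I (\<lambda>x. (u2 x)\<^sup>2) = 1" using nu2 unfolding L2_normalized_def I_eq by simp
  have hyp': "integral I (\<lambda>x. x * ((u2 x)\<^sup>2 - (u1 x)\<^sup>2)) = 0" using hyp unfolding I_eq by simp
  have "(u2 lo)\<^sup>2 > (u1 lo)\<^sup>2 \<and> (u2 hi)\<^sup>2 > (u1 hi)\<^sup>2"
    by (rule final_arg[OF lt p1 e1(3) e2(3) z(1) zh z(3) z(5) z5 e1(1) e2(1) e1(2) e2(2) n1 n2 hyp'])
  then show ?thesis by (simp add: lo_def hi_def)
qed

end

theorem lemma7p1:
  fixes L a \<alpha> \<beta> :: real and u1 u2 :: "real \<Rightarrow> real"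
  assumes "L > 0"
    and "first_eigenfunction L a \<alpha> \<beta> u1" and "L2_normalized L u1"
    and "second_eigenfunction L a \<alpha> \<beta> u2" and "L2_normalized L u2"
    and "integral {-L/2..L/2} (\<lambda>x. x * ((u2 x)\<^sup>2 - (u1 x)\<^sup>2)) = 0"
  shows "(u2 (-L/2))\<^sup>2 > (u1 (-L/2))\<^sup>2 \<and> (u2 (L/2))\<^sup>2 > (u1 (L/2))\<^sup>2"
proof -
  interpret rob L a \<alpha> \<beta> by unfold_locales (rule assms(1))
  show ?thesis by (rule main_loc[OF assms(2-6)])
qed


end
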